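(* Let $I$ be a proper ideal in $\mathbb{B}_n$ generated by $g_1,\dots,g_r\in\mathbb{B}_n$ with canonical representatives $G_1,\dots,G_r\in P=\mathbb{F}_2[X_1,\dots,X_n]$. Let $Z=(z_1,\dots,z_s)$ be a tuple of distinct Boolean indeterminates and $Z'=(Z_1,\dots,Z_s)$ the tuple of their canonical representatives. (a) The procedure $\mathrm{CHECK}$ (over $K=\mathbb{F}_2$) applied to $(G_1,\dots,G_r)$ and $Z'$ returns a weight tuple $W\in\mathbb{N}^n$ if and only if there exist $f_1,\dots,f_s\in\langle g_1,\dots,g_r\rangle_{\mathbb{F}_2}$ such that $(f_1,\dots,f_s)$ is a $Z$-separating tuple of Boolean polynomials in $I$. (b) In the situation of (a), for every term ordering $\sigma$ compatible with the grading given by $W$ there exist $f'_1,\dots,f'_s\in\langle g_1,\dots,g_r\rangle_{\mathbb{F}_2}$ with $\operatorname{LT}_\sigma(f'_i)=z_i$ for $i=1,\dots,s$.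
   Context: $\mathbb{I}_n=\langle X_1^2-X_1,\dots,X_n^2-X_n\rangle$, $\mathbb{B}_n=P/\mathbb{I}_n$, Boolean indeterminates $x_i=X_i+\mathbb{I}_n$. Every $f\in\mathbb{B}_n$ has a unique representative $F\in P$ that is a sum of square-free terms (canonical representative); for a term ordering $\sigma$ on $P$, $\operatorname{LT}_\sigma(f)=\operatorname{LT}_\sigma(F)+\mathbb{I}_n$. A tuple $(f_1,\dots,f_s)$ of Boolean polynomials in $I$ is $Z$-separating if there is a term ordering $\sigma$ with $\operatorname{LT}_\sigma(f_i)=z_i$ for all $i$. For $W\in\mathbb{N}^n$ the $W$-degree of $X_1^{a_1}\cdots X_n^{a_n}$ is $\sum w_ia_i$; a term ordering $\sigma$ is compatible with the grading given by $W$ if $t>_\sigma t'$ whenever the $W$-degree of $t$ exceeds that of $t'$. Below, $K$ is a field, $P=K[x_1,\dots,x_n]$ generically; here $K=\mathbb{F}_2$ and the indeterminates are $X_1,\dots,X_n$. $\operatorname{Supp}(f)$ is the set of terms of $f$; $\operatorname{Lin}(f)$ the homogeneous degree-1 component; $\langle\cdot\rangle_K$ the $K$-linear span. Procedure $\mathrm{LI}$ (linear interreduction), applied to a tuple $Z=(z_1,\dots,z_s)$ of distinct indeterminates and polynomials $g_1,\dots,g_r$: let $t_1>\dots>t_m$ (lexicographic order, $x_1>\dots>x_n$) be the terms of $\bigcup_j\operatorname{Supp}(g_j)$ other than $z_1,\dots,z_s$; form the coefficient matrix $M$ of $g_1,\dots,g_r$ w.r.t. column order $(z_1,\dots,z_s,t_1,\dots,t_m)$;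 output the polynomials whose coefficient vectors are the nonzero rows of the reduced row echelon form of $M$, in order. Procedure $\mathrm{CHECK}$ on input $(g_1,\dots,g_r)$ and $Z$: (1) set $w_1=\dots=w_n=0$, $\delta=\max_j\deg(g_j)$, $d=1$. (2) In each $g_j$ delete every monomial not divisible by some indeterminate of $Z$. (3) If $\dim_K\langle\operatorname{Lin}(g_1),\dots,\operatorname{Lin}(g_r)\rangle_K<\#Z$, return ``Fail''. (4) Repeat: (i) replace the current list $g_1,\dots,g_r$ by the output of $\mathrm{LI}$ applied to the current $Z$ and the current list; (ii) let $\widetilde Z$ be the set of indeterminates of the current $Z$ that occur as elements of the current list; (iii) if $\widetilde Z=\emptyset$, return ``Fail''; (iv) for each $z\in\widetilde Z$, say $z=x_k$, set $w_k=d$ and remove $z$ from $Z$; (v) in each current $g_j$ delete every monomial not divisible by some indeterminate of the (updated) $Z$; (vi) replace $d$ by $\delta d+1$; until $Z$ is empty. (5) Return $W=(w_1,\dots,w_n)$. *)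

theory Defs
  imports Main
begin

text \<open>Indeterminate X_(k+1) is represented by index k (0-based), k < n.
  A term (power product) of P is an exponent vector t :: nat => nat with t i = 0 for i >= n.
  A polynomial of P over F2 is the finite set of terms occurring in it (coefficient 1);
  addition is symmetric difference.\<close>

type_synonym pterm = "nat \<Rightarrow> nat"
type_synonym ppoly = "pterm set"

definition terms :: "nat \<Rightarrow> pterm set" where
  "terms n = {t. \<forall>i. n \<le> i \<longrightarrow> t i = 0}"

definition tone :: pterm where "tone = (\<lambda>_. 0)"

definition tmul :: "pterm \<Rightarrow> pterm \<Rightarrow> pterm" where
  "tmul s t = (\<lambda>i. s i + t i)"

definition tdeg :: "nat \<Rightarrow> pterm \<Rightarrow> nat" where
  "tdeg n t = (\<Sum>i<n. t i)"

definition wdeg :: "nat \<Rightarrow> (nat \<Rightarrow> nat) \<Rightarrow> pterm \<Rightarrow> nat" where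
  "wdeg n W t = (\<Sum>i<n. W i * t i)"

definition term_order :: "nat \<Rightarrow> (pterm \<Rightarrow> pterm \<Rightarrow> bool) \<Rightarrow> bool" where
  "term_order n lt \<longleftrightarrow>
     (\<forall>t\<in>terms n. \<not> lt t t) \<and>
     (\<forall>s\<in>terms n. \<forall>t\<in>terms n. \<forall>u\<in>terms n. lt s t \<longrightarrow> lt t u \<longrightarrow> lt s u) \<and>
     (\<forall>s\<in>terms n. \<forall>t\<in>terms n. s \<noteq> t \<longrightarrow> lt s t \<or> lt t s) \<and>
     (\<forall>s\<in>terms n. \<forall>t\<in>terms n. \<forall>u\<in>terms n. lt s t \<longrightarrow> lt (tmul s u) (tmul t u)) \<and>
     (\<forall>t\<in>terms n. t \<noteq> tone \<longrightarrow> lt tone t)"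

definition compatible :: "nat \<Rightarrow> (nat \<Rightarrow> nat) \<Rightarrow> (pterm \<Rightarrow> pterm \<Rightarrow> bool) \<Rightarrow> bool" where
  "compatible n W lt \<longleftrightarrow>
     (\<forall>t\<in>terms n. \<forall>t'\<in>terms n. wdeg n W t > wdeg n W t' \<longrightarrow> lt t' t)"

definition is_LT :: "(pterm \<Rightarrow> pterm \<Rightarrow> bool) \<Rightarrow> ppoly \<Rightarrow> pterm \<Rightarrow> bool" where
  "is_LT lt F t \<longleftrightarrow> t \<in> F \<and> (\<forall>s\<in>F. s \<noteq> t \<longrightarrow> lt s t)"

definition sdiff :: "'a set \<Rightarrow> 'a set \<Rightarrow> 'a set" where
  "sdiff a b = (a - b) \<union> (b - a)"

definition lsum :: "'a set list \<Rightarrow> 'a set" where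
  "lsum xs = foldr sdiff xs {}"

definition f2span :: "'a set list \<Rightarrow> 'a set set" where
  "f2span gs = {lsum (map2 (\<lambda>c g. if c then g else {}) cs gs) | cs. length cs = length gs}"

definition setsum2 :: "'a set set \<Rightarrow> 'a set" where
  "setsum2 C = {x. odd (card {c\<in>C. x \<in> c})}"

definition f2indep :: "'a set set \<Rightarrow> bool" where
  "f2indep B \<longleftrightarrow> finite B \<and> (\<forall>C\<subseteq>B. C \<noteq> {} \<longrightarrow> setsum2 C \<noteq> {})"

definition f2dim :: "'a set list \<Rightarrow> nat" where
  "f2dim gs = Max {card B | B. B \<subseteq> f2span gs \<and> f2indep B}"

text \<open>Elements of B_n are represented via their square-free terms: a square-free term is the
  (finite) set of indices of the indeterminates occurring in it; an element of B_n is the finite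
  set of square-free terms of its canonical representative.\<close>

type_synonym bpoly = "nat set set"

definition bpolys :: "nat \<Rightarrow> bpoly set" where
  "bpolys n = {f. finite f \<and> (\<forall>u\<in>f. u \<subseteq> {..<n})}"

text \<open>Multiplication in B_n (x_i^2 = x_i).\<close>
definition bmul :: "bpoly \<Rightarrow> bpoly \<Rightarrow> bpoly" where
  "bmul f g = {u. odd (card {(a, b). a \<in> f \<and> b \<in> g \<and> a \<union> b = u})}"

definition bideal :: "nat \<Rightarrow> bpoly list \<Rightarrow> bpoly set" where
  "bideal n gs = {lsum (map2 bmul hs gs) | hs. length hs = length gs \<and> set hs \<subseteq> bpolys n}"

definition sqterm :: "nat set \<Rightarrow> pterm" where
  "sqterm u = (\<lambda>i. if i \<in> u then 1 else 0)"

definition canon :: "bpoly \<Rightarrow> ppoly" where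
  "canon f = sqterm ` f"

definition var :: "nat \<Rightarrow> pterm" where
  "var k = sqterm {k}"

definition Z_separating :: "nat \<Rightarrow> bpoly set \<Rightarrow> nat list \<Rightarrow> bpoly list \<Rightarrow> bool" where
  "Z_separating n I zs fs \<longleftrightarrow> length fs = length zs \<and> set fs \<subseteq> I \<and>
     (\<exists>lt. term_order n lt \<and> (\<forall>i<length zs. is_LT lt (canon (fs ! i)) (var (zs ! i))))"

text \<open>Lexicographic order with x_1 > ... > x_n : t >lex u.\<close>
definition lex_gt :: "pterm \<Rightarrow> pterm \<Rightarrow> bool" where
  "lex_gt t u \<longleftrightarrow> (\<exists>i. u i < t i \<and> (\<forall>j<i. t j = u j))"

text \<open>Column order (z_1,...,z_s,t_1,...,t_m): column t comes strictly before column u.\<close>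
definition colless :: "nat list \<Rightarrow> pterm \<Rightarrow> pterm \<Rightarrow> bool" where
  "colless zs t u \<longleftrightarrow>
     (t \<in> var ` set zs \<and> u \<notin> var ` set zs) \<or>
     (\<exists>i j. i < j \<and> j < length zs \<and> t = var (zs ! i) \<and> u = var (zs ! j)) \<or>
     (t \<notin> var ` set zs \<and> u \<notin> var ` set zs \<and> lex_gt t u)"

definition is_pivot :: "nat list \<Rightarrow> ppoly \<Rightarrow> pterm \<Rightarrow> bool" where
  "is_pivot zs p t \<longleftrightarrow> t \<in> p \<and> (\<forall>u\<in>p. u \<noteq> t \<longrightarrow> colless zs t u)"

text \<open>rs is the list of nonzero rows (top to bottom) of the reduced row echelon form of the
  coefficient matrix of gs w.r.t. the column order given by zs.\<close>
definition is_rref_rows :: "nat list \<Rightarrow> ppoly list \<Rightarrow> ppoly list \<Rightarrow> bool" where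
  "is_rref_rows zs gs rs \<longleftrightarrow>
     f2span rs = f2span gs \<and>
     (\<forall>r\<in>set rs. r \<noteq> {}) \<and>
     (\<forall>i j. i < j \<and> j < length rs \<longrightarrow>
        (\<exists>ti tj. is_pivot zs (rs ! i) ti \<and> is_pivot zs (rs ! j) tj \<and> colless zs ti tj)) \<and>
     (\<forall>i<length rs. \<forall>j<length rs. i \<noteq> j \<longrightarrow> (\<forall>t. is_pivot zs (rs ! i) t \<longrightarrow> t \<notin> rs ! j))"

definition LI :: "nat list \<Rightarrow> ppoly list \<Rightarrow> ppoly list" where
  "LI zs gs = (THE rs. is_rref_rows zs gs rs)"

definition keep_div :: "nat list \<Rightarrow> ppoly \<Rightarrow> ppoly" where
  "keep_div zs g = {t\<in>g. \<exists>z\<in>set zs. 0 < t z}"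

definition Lin :: "nat \<Rightarrow> ppoly \<Rightarrow> ppoly" where
  "Lin n g = {t\<in>g. tdeg n t = 1}"

text \<open>The loop (step 4) of CHECK; None means "Fail".\<close>
function check_loop :: "nat \<Rightarrow> nat list \<Rightarrow> ppoly list \<Rightarrow> nat \<Rightarrow> (nat \<Rightarrow> nat) \<Rightarrow> (nat \<Rightarrow> nat) option"
where
  "check_loop \<delta> zs gs d w =
    (if zs = [] then Some w
     else (let gs' = LI zs gs;
               zt = filter (\<lambda>z. {var z} \<in> set gs') zs
           in if zt = [] then None
              else check_loop \<delta> (filter (\<lambda>z. z \<notin> set zt) zs)
                     (map (keep_div (filter (\<lambda>z. z \<notin> set zt) zs)) gs')
                     (\<delta> * d + 1) (\<lambda>k. if k \<in> set zt then d else w k)))"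
  by pat_completeness auto
termination
proof (relation "measure (\<lambda>(\<delta>, zs, gs, d, w). length zs)")
  fix \<delta> zs gs d w gs' zt
  assume "zs \<noteq> []" "gs' = LI zs gs" "zt = filter (\<lambda>z. {var z} \<in> set gs') zs" "zt \<noteq> []"
  then obtain z where "z \<in> set zs" "z \<in> set zt" by (metis last_in_set filter_is_subset subsetD)
  then show "((\<delta>, filter (\<lambda>z. z \<notin> set zt) zs, map (keep_div (filter (\<lambda>z. z \<notin> set zt) zs)) gs',
          \<delta> * d + 1, \<lambda>k. if k \<in> set zt then d else w k), \<delta>, zs, gs, d, w)
         \<in> measure (\<lambda>(\<delta>, zs, gs, d, w). length zs)"
    by (auto intro!: length_filter_less)
qed auto

text \<open>Procedure CHECK over F2, for polynomials in n indeterminates; None means "Fail",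
  Some W returns the weight tuple W = (W 0, ..., W (n-1)).\<close>
definition CHECK :: "nat \<Rightarrow> ppoly list \<Rightarrow> nat list \<Rightarrow> (nat \<Rightarrow> nat) option" where
  "CHECK n gs zs =
    (let \<delta> = Max (insert 0 (tdeg n ` \<Union>(set gs)));
         gs1 = map (keep_div zs) gs
     in if f2dim (map (Lin n) gs1) < length zs then None
        else check_loop \<delta> zs gs1 1 (\<lambda>_. 0))"

end

theory Submission
  imports Defs
begin

lemma mem_sdiff[simp]: "x \<in> sdiff a b \<longleftrightarrow> (x \<in> a) \<noteq> (x \<in> b)"
  by (auto simp: sdiff_def)

lemma sdiff_empty[simp]: "sdiff a {} = a" "sdiff {} a = a" "sdiff a a = {}"
  by (auto simp: sdiff_def)

lemma sdiff_comm: "sdiff a b = sdiff b a" by auto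
lemma sdiff_assoc: "sdiff (sdiff a b) c = sdiff a (sdiff b c)" by auto
lemma sdiff_left_comm: "sdiff a (sdiff b c) = sdiff b (sdiff a c)" by auto
lemma sdiff_cancel[simp]: "sdiff a (sdiff a b) = b" by auto

lemma lsum_Nil[simp]: "lsum [] = {}" and lsum_Cons[simp]: "lsum (x#xs) = sdiff x (lsum xs)"
  by (auto simp: lsum_def)

lemma f2span_Nil: "f2span [] = {{}}"
  by (auto simp: f2span_def)

lemma f2span_Cons: "f2span (g#gs) = f2span gs \<union> sdiff g ` f2span gs"
proof (intro equalityI subsetI)
  fix x assume "x \<in> f2span (g#gs)"
  then obtain cs where cs: "length cs = Suc (length gs)"
    "x = lsum (map2 (\<lambda>c g. if c then g else {}) cs (g#gs))" unfolding f2span_def by auto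
  then obtain c cs' where "cs = c#cs'" "length cs' = length gs" by (cases cs) auto
  moreover have "lsum (map2 (\<lambda>c g. if c then g else {}) cs' gs) \<in> f2span gs"
    using calculation(2) unfolding f2span_def by auto
  ultimately show "x \<in> f2span gs \<union> sdiff g ` f2span gs" using cs(2)
    by (cases c) auto
next
  fix x assume "x \<in> f2span gs \<union> sdiff g ` f2span gs"
  then obtain y b where y: "y \<in> f2span gs" "x = (if b then sdiff g y else y)"
    by (metis (full_types) UnE imageE)
  from y(1) obtain cs where cs: "length cs = length gs"
    "y = lsum (map2 (\<lambda>c g. if c then g else {}) cs gs)" unfolding f2span_def by auto
  have "x = lsum (map2 (\<lambda>c g. if c then g else {}) (b#cs) (g#gs))" using y(2) cs(2) by simp
  moreover have "length (b#cs) = length (g#gs)" using cs by simp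
  ultimately show "x \<in> f2span (g#gs)" unfolding f2span_def by blast
qed

lemma empty_in_span[simp]: "{} \<in> f2span gs"
  by (induction gs) (auto simp: f2span_Nil f2span_Cons)

lemma span_closed: "a \<in> f2span gs \<Longrightarrow> b \<in> f2span gs \<Longrightarrow> sdiff a b \<in> f2span gs"
proof (induction gs arbitrary: a b)
  case Nil then show ?case by (simp add: f2span_Nil)
next
  case (Cons g gs)
  from Cons.prems obtain a' b' p q where a: "a' \<in> f2span gs" "a = (if p then sdiff g a' else a')"
    and b: "b' \<in> f2span gs" "b = (if q then sdiff g b' else b')"
    unfolding f2span_Cons by (metis (full_types) UnE imageE)
  have ab: "sdiff a' b' \<in> f2span gs" using Cons.IH a b by blast
  have "sdiff a b = (if p = q then sdiff a' b' else sdiff g (sdiff a' b'))"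
    using a(2) b(2) by auto
  then show ?case using ab unfolding f2span_Cons by auto
qed

lemma gen_in_span: "g \<in> set gs \<Longrightarrow> g \<in> f2span gs"
  by (induction gs) (auto simp: f2span_Cons intro: image_eqI[of _ _ "{}"])

lemma span_minimal:
  assumes "{} \<in> S" "\<And>a b. a \<in> S \<Longrightarrow> b \<in> S \<Longrightarrow> sdiff a b \<in> S" "set gs \<subseteq> S"
  shows "f2span gs \<subseteq> S"
  using assms(3) by (induction gs) (auto simp: f2span_Nil f2span_Cons assms(1,2))

lemma span_subset: "set gs \<subseteq> f2span hs \<Longrightarrow> f2span gs \<subseteq> f2span hs"
  by (rule span_minimal) (auto intro: span_closed)

lemma span_linear:
  assumes "h {} = {}" "\<And>a b. h (sdiff a b) = sdiff (h a) (h b)"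
  shows "f2span (map h gs) = h ` f2span gs"
proof (induction gs)
  case Nil then show ?case by (simp add: f2span_Nil assms)
next
  case (Cons g gs)
  have "sdiff (h g) ` (h ` f2span gs) = h ` (sdiff g ` f2span gs)"
    by (auto simp: image_image assms(2))
  then show ?case using Cons by (simp add: f2span_Cons image_Un)
qed

lemma finite_span: "finite (f2span gs)"
  by (induction gs) (auto simp: f2span_Nil f2span_Cons)

lemma span_sub_Union: "v \<in> f2span gs \<Longrightarrow> v \<subseteq> \<Union>(set gs)"
proof (induction gs arbitrary: v)
  case Nil then show ?case by (simp add: f2span_Nil)
next
  case (Cons g gs)
  from Cons.prems have "v \<in> f2span gs \<or> (\<exists>u\<in>f2span gs. v = sdiff g u)"
    unfolding f2span_Cons by blast
  moreover have "sdiff g u \<subseteq> g \<union> u" for u by auto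
  ultimately show ?case using Cons.IH by fastforce
qed

lemma span_finite_elems: "v \<in> f2span gs \<Longrightarrow> \<forall>g\<in>set gs. finite g \<Longrightarrow> finite v"
  by (meson List.finite_set finite_Union finite_subset span_sub_Union)

lemma setsum2_empty[simp]: "setsum2 {} = {}" by (simp add: setsum2_def)

lemma setsum2_insert: "finite C \<Longrightarrow> r \<notin> C \<Longrightarrow> setsum2 (insert r C) = sdiff r (setsum2 C)"
proof -
  assume f: "finite C" and r: "r \<notin> C"
  show ?thesis
  proof (rule set_eqI)
    fix x
    have "{c\<in>insert r C. x \<in> c} = (if x \<in> r then insert r {c\<in>C. x \<in> c} else {c\<in>C. x \<in> c})" by auto
    then show "x \<in> setsum2 (insert r C) \<longleftrightarrow> x \<in> sdiff r (setsum2 C)"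
      using f r by (simp add: setsum2_def)
  qed
qed

lemma setsum2_single[simp]: "setsum2 {r} = r"
  using setsum2_insert[of "{}" r] by simp

lemma setsum2_in_span: "finite C \<Longrightarrow> C \<subseteq> f2span L \<Longrightarrow> setsum2 C \<in> f2span L"
  by (induction C rule: finite_induct) (auto simp: setsum2_insert span_closed)

lemma span_setsum2: "v \<in> f2span R \<Longrightarrow> \<exists>C\<subseteq>set R. v = setsum2 C"
proof (induction R arbitrary: v)
  case Nil then show ?case by (auto simp: f2span_Nil)
next
  case (Cons r R)
  from Cons.prems consider "v \<in> f2span R" | u where "u \<in> f2span R" "v = sdiff r u"
    unfolding f2span_Cons by blast
  then show ?case
  proof cases
    case 1 then obtain C where "C \<subseteq> set R" "v = setsum2 C" using Cons.IH by blast
    then show ?thesis by (intro exI[of _ C]) auto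
  next
    case 2
    then obtain C where C: "C \<subseteq> set R" "u = setsum2 C" using Cons.IH by blast
    have fC: "finite C" using C(1) finite_subset by blast
    show ?thesis
    proof (cases "r \<in> C")
      case True
      have "setsum2 C = sdiff r (setsum2 (C - {r}))"
        using setsum2_insert[of "C - {r}" r] fC True by (simp add: insert_absorb)
      then have "v = setsum2 (C - {r})" using 2 C by simp
      then show ?thesis using C by (intro exI[of _ "C - {r}"]) auto
    next
      case False
      then have "v = setsum2 (insert r C)" using 2 C fC by (simp add: setsum2_insert)
      then show ?thesis using C by (intro exI[of _ "insert r C"]) auto
    qed
  qed
qed


lemma finite_has_min_aux:
  assumes "finite S" "S \<noteq> {}" "S \<subseteq> S0"
    and tr: "\<And>x y z. x \<in> S0 \<Longrightarrow> y \<in> S0 \<Longrightarrow> z \<in> S0 \<Longrightarrow> R x y \<Longrightarrow> R y z \<Longrightarrow> R x z"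
    and to: "\<And>x y. x \<in> S0 \<Longrightarrow> y \<in> S0 \<Longrightarrow> x \<noteq> y \<Longrightarrow> R x y \<or> R y x"
  shows "\<exists>m\<in>S. \<forall>x\<in>S. x \<noteq> m \<longrightarrow> R m x"
  using assms(1,2,3)
proof (induction S rule: finite_ne_induct)
  case (singleton x) show ?case by simp
next
  case (insert a F)
  from insert.IH insert.prems obtain m where m: "m \<in> F" "\<forall>x\<in>F. x \<noteq> m \<longrightarrow> R m x"
    by blast
  have am: "a \<noteq> m" using m(1) insert.hyps by metis
  have aS: "a \<in> S0" and FS: "F \<subseteq> S0" using insert.prems by simp_all
  show ?case
  proof (cases "R a m")
    case True
    have "\<forall>x\<in>insert a F. x \<noteq> a \<longrightarrow> R a x"
    proof (intro ballI impI)
      fix x assume x: "x \<in> insert a F" "x \<noteq> a"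
      then have xF: "x \<in> F" by simp
      show "R a x"
      proof (cases "x = m")
        case True then show ?thesis using \<open>R a m\<close> by simp
      next
        case False
        then have "R m x" using m xF by simp
        then show ?thesis using tr[of a m x] \<open>R a m\<close> aS FS m(1) xF by blast
      qed
    qed
    then show ?thesis by (intro bexI[of _ a]) simp_all
  next
    case False
    have "R a m \<or> R m a" using to[of a m] aS FS m(1) am by blast
    then have "R m a" using False by simp
    then show ?thesis using m by (intro bexI[of _ m]) simp_all
  qed
qed

lemma finite_has_min:
  assumes "finite S" "S \<noteq> {}"
    and "\<And>x y z. x \<in> S \<Longrightarrow> y \<in> S \<Longrightarrow> z \<in> S \<Longrightarrow> R x y \<Longrightarrow> R y z \<Longrightarrow> R x z"
    and "\<And>x y. x \<in> S \<Longrightarrow> y \<in> S \<Longrightarrow> x \<noteq> y \<Longrightarrow> R x y \<or> R y x"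
  shows "\<exists>m\<in>S. \<forall>x\<in>S. x \<noteq> m \<longrightarrow> R m x"
  by (rule finite_has_min_aux[OF assms(1,2) subset_refl assms(3,4)])

lemma lex_irrefl: "\<not> lex_gt t t"
  by (auto simp: lex_gt_def)

lemma lex_trans: "lex_gt a b \<Longrightarrow> lex_gt b c \<Longrightarrow> lex_gt a c"
proof -
  assume "lex_gt a b" "lex_gt b c"
  then obtain i j where i: "b i < a i" "\<forall>k<i. a k = b k" and j: "c j < b j" "\<forall>k<j. b k = c k"
    by (auto simp: lex_gt_def)
  show "lex_gt a c"
  proof (cases "i < j")
    case True
    then show ?thesis unfolding lex_gt_def using i j by (intro exI[of _ i]) auto
  next
    case False
    then show ?thesis unfolding lex_gt_def using i j
      by (intro exI[of _ j]) (metis le_neq_implies_less less_trans not_less order.strict_trans1)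
  qed
qed

lemma lex_total: "a \<noteq> b \<Longrightarrow> lex_gt a b \<or> lex_gt b a"
proof -
  assume "a \<noteq> b"
  then have "\<exists>i. a i \<noteq> b i" by auto
  define i where "i = (LEAST i. a i \<noteq> b i)"
  have i: "a i \<noteq> b i" using LeastI_ex[OF \<open>\<exists>i. a i \<noteq> b i\<close>] i_def by simp
  have "\<forall>k<i. a k = b k" using not_less_Least i_def by blast
  then show ?thesis using i unfolding lex_gt_def
    by (metis linorder_neqE_nat)
qed

lemma lex_mult: "lex_gt (tmul t s) (tmul u s) \<longleftrightarrow> lex_gt t u"
  by (simp add: lex_gt_def tmul_def)

lemma var_inj: "var a = var b \<longleftrightarrow> a = b"
proof
  assume "var a = var b"
  then have "var a a = var b a" by simp
  then show "a = b" by (simp add: var_def sqterm_def split: if_splits)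
qed simp

lemma sqterm_inj: "sqterm u = sqterm v \<longleftrightarrow> u = v"
proof
  assume "sqterm u = sqterm v"
  then have "\<And>i. sqterm u i = sqterm v i" by simp
  then show "u = v" by (auto simp: sqterm_def split: if_splits) (metis one_neq_zero)+
qed simp

section \<open>Column order\<close>

locale colctx =
  fixes zs :: "nat list"
  assumes dist: "distinct zs"
begin

lemma var_nth_eq: "i < length zs \<Longrightarrow> j < length zs \<Longrightarrow> var (zs!i) = var (zs!j) \<longleftrightarrow> i = j"
  using dist by (simp add: var_inj nth_eq_iff_index_eq)

lemma varV: "i < length zs \<Longrightarrow> var (zs!i) \<in> var ` set zs"
  by simp

lemma colA: "t \<in> var ` set zs \<Longrightarrow> u \<notin> var ` set zs \<Longrightarrow> colless zs t u"
  unfolding colless_def by simp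
lemma colB: "i < j \<Longrightarrow> j < length zs \<Longrightarrow> colless zs (var (zs!i)) (var (zs!j))"
  unfolding colless_def by (intro disjI2 disjI1 exI conjI) (assumption | rule refl)+
lemma colC: "t \<notin> var ` set zs \<Longrightarrow> u \<notin> var ` set zs \<Longrightarrow> lex_gt t u \<Longrightarrow> colless zs t u"
  unfolding colless_def by simp
lemma colE:
  assumes "colless zs t u"
  obtains "t \<in> var ` set zs" "u \<notin> var ` set zs"
  | i j where "i < j" "j < length zs" "t = var (zs!i)" "u = var (zs!j)"
  | "t \<notin> var ` set zs" "u \<notin> var ` set zs" "lex_gt t u"
  using assms unfolding colless_def by metis

lemma col_irrefl: "\<not> colless zs t t"
proof
  assume "colless zs t t"
  then show False
  proof (rule colE)
    fix i j assume "i < j" "j < length zs" "t = var (zs!i)" "t = var (zs!j)"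
    then show False using var_nth_eq[of i j] by simp
  qed (simp_all add: lex_irrefl)
qed

lemma col_trans: "colless zs a b \<Longrightarrow> colless zs b c \<Longrightarrow> colless zs a c"
proof -
  assume ab: "colless zs a b" and bc: "colless zs b c"
  from ab show ?thesis
  proof (rule colE)
    assume A: "a \<in> var ` set zs" "b \<notin> var ` set zs"
    from bc have "c \<notin> var ` set zs"
    proof (rule colE)
      fix i j assume "b = var (zs!i)" "i < j" "j < length zs"
      then show ?thesis using A(2) varV[of i] by simp
    qed simp_all
    then show ?thesis by (rule colA[OF A(1)])
  next
    fix i j assume B: "i < j" "j < length zs" "a = var (zs!i)" "b = var (zs!j)"
    have bV: "b \<in> var ` set zs" using B varV by simp
    have aV: "a \<in> var ` set zs" using B varV by simp
    from bc show ?thesis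
    proof (rule colE)
      assume "c \<notin> var ` set zs" then show ?thesis by (rule colA[OF aV])
    next
      fix k l assume K: "k < l" "l < length zs" "b = var (zs!k)" "c = var (zs!l)"
      have "k = j" using K B var_nth_eq[of k j] by simp
      then have "i < l" using B K by simp
      then show ?thesis using B K colB by simp
    next
      assume "b \<notin> var ` set zs" then show ?thesis using bV by simp
    qed
  next
    assume C: "a \<notin> var ` set zs" "b \<notin> var ` set zs" "lex_gt a b"
    from bc show ?thesis
    proof (rule colE)
      assume "b \<in> var ` set zs" then show ?thesis using C by simp
    next
      fix k l assume "k < l" "l < length zs" "b = var (zs!k)"
      then show ?thesis using C varV[of k] by simp
    next
      assume "c \<notin> var ` set zs" "lex_gt b c"
      then show ?thesis using C lex_trans colC by metis
    qed
  qed
qed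

lemma col_total: "a \<noteq> b \<Longrightarrow> colless zs a b \<or> colless zs b a"
proof -
  assume ab: "a \<noteq> b"
  consider "a \<in> var ` set zs" "b \<in> var ` set zs" | "a \<in> var ` set zs" "b \<notin> var ` set zs"
    | "a \<notin> var ` set zs" "b \<in> var ` set zs" | "a \<notin> var ` set zs" "b \<notin> var ` set zs"
    by blast
  then show ?thesis
  proof cases
    case 1
    then obtain i j where ij: "i < length zs" "j < length zs" "a = var (zs!i)" "b = var (zs!j)"
      by (metis imageE in_set_conv_nth)
    then have "i \<noteq> j" using ab by auto
    then have "i < j \<or> j < i" by arith
    then show ?thesis using ij colB by metis
  next
    case 2 then show ?thesis using colA by simp
  next
    case 3 then show ?thesis using colA by simp
  next
    case 4 then show ?thesis using lex_total[OF ab] colC by metis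
  qed
qed

lemma col_asym: "colless zs a b \<Longrightarrow> \<not> colless zs b a"
  using col_irrefl col_trans by metis

lemma pivot_exists: "finite p \<Longrightarrow> p \<noteq> {} \<Longrightarrow> \<exists>t. is_pivot zs p t"
proof -
  assume "finite p" "p \<noteq> {}"
  then have "\<exists>m\<in>p. \<forall>x\<in>p. x \<noteq> m \<longrightarrow> colless zs m x"
    by (rule finite_has_min[of p "colless zs"]) (auto intro: col_trans dest: col_total)
  then show ?thesis unfolding is_pivot_def by blast
qed

lemma pivot_unique: "is_pivot zs p t \<Longrightarrow> is_pivot zs p t' \<Longrightarrow> t = t'"
  unfolding is_pivot_def using col_asym by metis

definition piv :: "ppoly \<Rightarrow> pterm" where "piv p = (THE t. is_pivot zs p t)"

lemma piv: "finite p \<Longrightarrow> p \<noteq> {} \<Longrightarrow> is_pivot zs p (piv p)"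
  unfolding piv_def using pivot_exists pivot_unique by (metis theI)

lemma piv_eq: "is_pivot zs p t \<Longrightarrow> piv p = t"
  unfolding piv_def using pivot_unique by blast

end


lemma sorted_wrt_unique:
  assumes "sorted_wrt Q xs" "sorted_wrt Q ys" "set xs = set ys"
    and asym: "\<And>a b. Q a b \<Longrightarrow> \<not> Q b a"
  shows "xs = ys"
  using assms(1-3)
proof (induction xs arbitrary: ys)
  case Nil then show ?case by simp
next
  case (Cons x xs)
  from Cons.prems(3) obtain y ys' where ys: "ys = y # ys'" by (cases ys) auto
  have irr: "\<not> Q a a" for a using asym by blast
  have xn: "x \<notin> set xs" using Cons.prems(1) irr by auto
  have yn: "y \<notin> set ys'" using Cons.prems(2) ys irr by auto
  have xy: "x = y"
  proof (rule ccontr)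
    assume "x \<noteq> y"
    then have "x \<in> set ys'" "y \<in> set xs" using Cons.prems(3) ys by (auto simp: set_eq_iff)
    then have "Q y x" "Q x y" using Cons.prems(1,2) ys by auto
    then show False using asym by blast
  qed
  have "set xs = set ys'"
  proof -
    have "insert x (set xs) = insert x (set ys')" using Cons.prems(3) ys xy by simp
    then show ?thesis using xn yn xy by (metis insert_ident)
  qed
  then have "xs = ys'" using Cons.IH Cons.prems(1,2) ys by simp
  then show ?case using ys xy by simp
qed

context colctx begin

definition rref :: "ppoly list \<Rightarrow> bool" where
  "rref R \<longleftrightarrow> (\<forall>r\<in>set R. finite r \<and> r \<noteq> {}) \<and>
     sorted_wrt (\<lambda>a b. colless zs (piv a) (piv b)) R \<and>
     (\<forall>r\<in>set R. \<forall>r'\<in>set R. r \<noteq> r' \<longrightarrow> piv r \<notin> r')"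

lemma rref_piv: "rref R \<Longrightarrow> r \<in> set R \<Longrightarrow> is_pivot zs r (piv r)"
  unfolding rref_def using piv by blast

lemma rref_other: "rref R \<Longrightarrow> r \<in> set R \<Longrightarrow> r' \<in> set R \<Longrightarrow> r \<noteq> r' \<Longrightarrow> piv r \<notin> r'"
  unfolding rref_def by blast

lemma rows_setsum2:
  assumes R: "rref R" and C: "C \<subseteq> set R"
  shows "\<forall>r\<in>set R. piv r \<in> setsum2 C \<longleftrightarrow> r \<in> C"
    and "setsum2 C \<subseteq> \<Union>C"
proof -
  have fC: "finite C" using C finite_subset by blast
  show "\<forall>r\<in>set R. piv r \<in> setsum2 C \<longleftrightarrow> r \<in> C"
  proof
    fix r assume r: "r \<in> set R"
    have "{c\<in>C. piv r \<in> c} = (if r \<in> C then {r} else {})"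
    proof (intro set_eqI iffI)
      fix c assume "c \<in> {c\<in>C. piv r \<in> c}"
      then have c: "c \<in> C" "piv r \<in> c" by simp_all
      then have "c = r" using rref_other[OF R r, of c] C by blast
      then show "c \<in> (if r \<in> C then {r} else {})" using c by simp
    next
      fix c assume "c \<in> (if r \<in> C then {r} else {})"
      then have "c = r" "r \<in> C" by (simp_all split: if_splits)
      then show "c \<in> {c\<in>C. piv r \<in> c}" using rref_piv[OF R r] unfolding is_pivot_def by simp
    qed
    then show "piv r \<in> setsum2 C \<longleftrightarrow> r \<in> C" unfolding setsum2_def by simp
  qed
  show "setsum2 C \<subseteq> \<Union>C"
  proof
    fix x assume "x \<in> setsum2 C"
    then have "odd (card {c\<in>C. x \<in> c})" unfolding setsum2_def by simp
    then have "{c\<in>C. x \<in> c} \<noteq> {}" by (metis card.empty even_zero)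
    then show "x \<in> \<Union>C" by blast
  qed
qed

lemma lead_span:
  assumes R: "rref R" and v: "v \<in> f2span R" "v \<noteq> {}"
  shows "\<exists>r\<in>set R. is_pivot zs v (piv r)"
proof -
  obtain C where C: "C \<subseteq> set R" "v = setsum2 C" using span_setsum2[OF v(1)] by blast
  have fC: "finite C" using C finite_subset by blast
  have Cne: "C \<noteq> {}" using C v(2) by auto
  have "\<exists>m\<in>piv ` C. \<forall>x\<in>piv ` C. x \<noteq> m \<longrightarrow> colless zs m x"
    by (rule finite_has_min) (use fC Cne in \<open>auto intro: col_trans dest: col_total\<close>)
  then obtain r0 where r0: "r0 \<in> C" "\<forall>c\<in>C. piv c \<noteq> piv r0 \<longrightarrow> colless zs (piv r0) (piv c)"
    by auto
  have r0R: "r0 \<in> set R" using r0 C by blast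
  have "is_pivot zs v (piv r0)"
    unfolding is_pivot_def
  proof (intro conjI ballI impI)
    show "piv r0 \<in> v" using rows_setsum2(1)[OF R C(1)] r0R r0(1) C(2) by simp
  next
    fix t assume t: "t \<in> v" "t \<noteq> piv r0"
    then obtain c where c: "c \<in> C" "t \<in> c" using rows_setsum2(2)[OF R C(1)] C(2) by blast
    have cR: "c \<in> set R" using c C by blast
    have tc: "t = piv c \<or> colless zs (piv c) t"
      using rref_piv[OF R cR] c(2) unfolding is_pivot_def by blast
    show "colless zs (piv r0) t"
    proof (cases "piv c = piv r0")
      case True then show ?thesis using tc t(2) by simp
    next
      case False
      then have "colless zs (piv r0) (piv c)" using r0(2) c(1) by blast
      then show ?thesis using tc col_trans by metis
    qed
  qed
  then show ?thesis using r0R by blast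
qed

lemma single_row:
  assumes R: "rref R" and v: "{t} \<in> f2span R"
  shows "{t} \<in> set R"
proof -
  obtain C where C: "C \<subseteq> set R" "{t} = setsum2 C" using span_setsum2[OF v] by blast
  have Cne: "C \<noteq> {}" using C by (metis setsum2_empty insert_not_empty)
  have pv: "piv r = t" if "r \<in> C" for r
  proof -
    have "piv r \<in> setsum2 C" using rows_setsum2(1)[OF R C(1)] that C(1) by blast
    then show ?thesis using C(2) by (metis singletonD)
  qed
  obtain r where r: "r \<in> C" using Cne by blast
  have "C = {r}"
  proof (intro set_eqI iffI)
    fix c assume c: "c \<in> C"
    show "c \<in> {r}"
    proof (rule ccontr)
      assume "c \<notin> {r}"
      then have "c \<noteq> r" by simp
      then have "piv c \<notin> r" using rref_other[OF R, of c r] c r C(1) by blast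
      moreover have "piv r \<in> r" using rref_piv[OF R, of r] r C(1) unfolding is_pivot_def by blast
      ultimately show False using pv[OF c] pv[OF r] by simp
    qed
  qed (use r in simp)
  then have "{t} = r" using C(2) by simp
  then show ?thesis using r C(1) by blast
qed

lemma piv_set_eq:
  assumes R: "rref R"
  shows "piv ` set R = piv ` (f2span R - {{}})"
proof (intro equalityI subsetI)
  fix x assume "x \<in> piv ` set R"
  then obtain r where r: "r \<in> set R" "x = piv r" by blast
  have "r \<in> f2span R - {{}}" using gen_in_span[OF r(1)] R r(1) unfolding rref_def by blast
  then show "x \<in> piv ` (f2span R - {{}})" using r(2) by blast
next
  fix x assume "x \<in> piv ` (f2span R - {{}})"
  then obtain v where v: "v \<in> f2span R" "v \<noteq> {}" "x = piv v" by blast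
  obtain r where r: "r \<in> set R" "is_pivot zs v (piv r)" using lead_span[OF R v(1,2)] by blast
  have "x = piv r" using piv_eq[OF r(2)] v(3) by simp
  then show "x \<in> piv ` set R" using r(1) by blast
qed

lemma rref_set_sub:
  assumes R: "rref R" and R': "rref R'" and sp: "f2span R = f2span R'"
  shows "set R \<subseteq> set R'"
proof
  fix r assume r: "r \<in> set R"
  have PP: "piv ` set R = piv ` set R'" using piv_set_eq[OF R] piv_set_eq[OF R'] sp by simp
  have "r \<in> f2span R'" using gen_in_span[OF r] sp by simp
  then obtain C where C: "C \<subseteq> set R'" "r = setsum2 C" using span_setsum2 by blast
  have rne: "r \<noteq> {}" using R r unfolding rref_def by blast
  have Cne: "C \<noteq> {}" using C rne by auto
  have pv: "piv c = piv r" if c: "c \<in> C" for c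
  proof -
    have cR': "c \<in> set R'" using c C by blast
    have pc: "piv c \<in> r" using rows_setsum2(1)[OF R' C(1)] cR' c C(2) by simp
    obtain r'' where r'': "r'' \<in> set R" "piv c = piv r''" using PP cR' by (metis imageE imageI)
    have "r'' = r"
    proof (rule ccontr)
      assume "r'' \<noteq> r"
      then have "piv r'' \<notin> r" using rref_other[OF R r''(1) r] by simp
      then show False using pc r''(2) by simp
    qed
    then show ?thesis using r''(2) by simp
  qed
  obtain c0 where c0: "c0 \<in> C" using Cne by blast
  have "C = {c0}"
  proof (intro set_eqI iffI)
    fix c assume c: "c \<in> C"
    show "c \<in> {c0}"
    proof (rule ccontr)
      assume "c \<notin> {c0}"
      then have "c \<noteq> c0" by simp
      then have "piv c \<notin> c0" using rref_other[OF R', of c c0] c c0 C(1) by blast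
      moreover have "piv c0 \<in> c0" using rref_piv[OF R', of c0] c0 C(1) unfolding is_pivot_def by blast
      ultimately show False using pv[OF c] pv[OF c0] by simp
    qed
  qed (use c0 in simp)
  then have "r = c0" using C(2) by simp
  then show "r \<in> set R'" using c0 C(1) by blast
qed

lemma rref_unique:
  assumes R: "rref R" and R': "rref R'" and sp: "f2span R = f2span R'"
  shows "R = R'"
proof (rule sorted_wrt_unique)
  show "sorted_wrt (\<lambda>a b. colless zs (piv a) (piv b)) R" using R unfolding rref_def by blast
  show "sorted_wrt (\<lambda>a b. colless zs (piv a) (piv b)) R'" using R' unfolding rref_def by blast
  show "set R = set R'" using rref_set_sub[OF R R' sp] rref_set_sub[OF R' R sp[symmetric]] by blast
  show "\<And>a b. colless zs (piv a) (piv b) \<Longrightarrow> \<not> colless zs (piv b) (piv a)" using col_asym by blast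
qed

end


context colctx begin

lemma rref_step:
  assumes R: "rref R" and g: "finite g" and sp: "f2span R = f2span gs'"
  shows "\<exists>R'. rref R' \<and> f2span R' = f2span (g # gs')"
proof -
  define S where "S = {r\<in>set R. piv r \<in> g}"
  have SR: "S \<subseteq> set R" unfolding S_def by blast
  have fS: "finite S" using SR finite_subset by blast
  define g' where "g' = sdiff g (setsum2 S)"
  have S_span: "setsum2 S \<in> f2span R" using setsum2_in_span[OF fS] SR gen_in_span by blast
  have span_sub: "f2span gs' \<subseteq> f2span (g#gs')" unfolding f2span_Cons by blast
  have g_span: "g \<in> f2span (g#gs')" by (rule gen_in_span) simp
  have pivnot: "piv r \<notin> g'" if r: "r \<in> set R" for r
  proof -
    have "piv r \<in> setsum2 S \<longleftrightarrow> r \<in> S" using rows_setsum2(1)[OF R SR] r by blast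
    then show ?thesis unfolding g'_def S_def using r by simp
  qed
  have rfin: "finite r" "r \<noteq> {}" if "r \<in> set R" for r using R that unfolding rref_def by blast+
  have fS2: "finite (setsum2 S)"
    using rows_setsum2(2)[OF R SR] fS SR rfin(1) by (meson finite_Union finite_subset subsetD)
  have fg': "finite g'" unfolding g'_def using g fS2 by (simp add: sdiff_def)
  show ?thesis
  proof (cases "g' = {}")
    case True
    then have "g = setsum2 S" unfolding g'_def by (auto simp: sdiff_def)
    then have gin: "g \<in> f2span gs'" using S_span sp by simp
    have "f2span (g#gs') = f2span gs'"
    proof
      show "f2span (g#gs') \<subseteq> f2span gs'" unfolding f2span_Cons using gin span_closed by blast
    qed (rule span_sub)
    then show ?thesis using R sp by metis
  next
    case False
    define p where "p = piv g'"
    have pg': "is_pivot zs g' p" unfolding p_def using piv[OF fg' False] .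
    have pR: "piv r \<noteq> p" if "r \<in> set R" for r using pivnot[OF that] pg' unfolding is_pivot_def by blast
    define upd where "upd r = (if p \<in> r then sdiff r g' else r)" for r
    have upd_piv: "is_pivot zs (upd r) (piv r)" if r: "r \<in> set R" for r
    proof (cases "p \<in> r")
      case False then show ?thesis unfolding upd_def using rref_piv[OF R r] by simp
    next
      case True
      have pr: "is_pivot zs r (piv r)" using rref_piv[OF R r] .
      have cp: "colless zs (piv r) p" using pr True pR[OF r] unfolding is_pivot_def by metis
      show ?thesis unfolding upd_def is_pivot_def
      proof (simp only: True if_True, intro conjI ballI impI)
        show "piv r \<in> sdiff r g'" using pr pivnot[OF r] unfolding is_pivot_def by simp
      next
        fix u assume u: "u \<in> sdiff r g'" "u \<noteq> piv r"
        then consider "u \<in> r" | "u \<in> g'" by auto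
        then show "colless zs (piv r) u"
        proof cases
          case 1 then show ?thesis using pr u(2) unfolding is_pivot_def by blast
        next
          case 2
          then have "u = p \<or> colless zs p u" using pg' unfolding is_pivot_def by blast
          then show ?thesis using cp col_trans by metis
        qed
      qed
    qed
    have upd_pv: "piv (upd r) = piv r" if "r \<in> set R" for r using piv_eq[OF upd_piv[OF that]] .
    have upd_sub: "upd r \<subseteq> r \<union> g'" for r unfolding upd_def by (auto simp: sdiff_def)
    have p_upd: "p \<notin> upd r" for r unfolding upd_def using pg' unfolding is_pivot_def by auto
    have upd_fin: "finite (upd r)" if "r \<in> set R" for r
      using upd_sub[of r] rfin[OF that] fg' by (meson finite_Un finite_subset)
    define F1 where "F1 = filter (\<lambda>r. colless zs (piv r) p) R"
    define F2 where "F2 = filter (\<lambda>r. colless zs p (piv r)) R"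
    define R' where "R' = map upd F1 @ g' # map upd F2"
    have setR': "set R' = upd ` set R \<union> {g'}"
    proof -
      have "set R = set F1 \<union> set F2" unfolding F1_def F2_def using pR col_total by auto
      moreover have "set F1 \<subseteq> set R" "set F2 \<subseteq> set R" unfolding F1_def F2_def by auto
      ultimately show ?thesis unfolding R'_def by auto
    qed
    have rowsR': "finite x \<and> x \<noteq> {}" if "x \<in> set R'" for x
    proof -
      from that setR' consider r where "r \<in> set R" "x = upd r" | "x = g'" by blast
      then show ?thesis
      proof cases
        case 1
        have "piv r \<in> upd r" using upd_piv[OF 1(1)] unfolding is_pivot_def by (rule conjunct1)
        then show ?thesis using upd_fin[OF 1(1)] 1(2) by auto
      qed (use fg' False in simp)
    qed
    have sortR': "sorted_wrt (\<lambda>a b. colless zs (piv a) (piv b)) R'"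
    proof -
      have sR: "sorted_wrt (\<lambda>a b. colless zs (piv a) (piv b)) R" using R unfolding rref_def by blast
      have s1: "sorted_wrt (\<lambda>a b. colless zs (piv a) (piv b)) F1" unfolding F1_def by (rule sorted_wrt_filter[OF sR])
      have s2: "sorted_wrt (\<lambda>a b. colless zs (piv a) (piv b)) F2" unfolding F2_def by (rule sorted_wrt_filter[OF sR])
      have F1R: "set F1 \<subseteq> set R" and F2R: "set F2 \<subseteq> set R" unfolding F1_def F2_def by auto
      have m1: "sorted_wrt (\<lambda>a b. colless zs (piv a) (piv b)) (map upd F1)"
        unfolding sorted_wrt_map
        by (rule sorted_wrt_mono_rel[OF _ s1]) (metis F1R subsetD upd_pv)
      have m2: "sorted_wrt (\<lambda>a b. colless zs (piv a) (piv b)) (map upd F2)"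
        unfolding sorted_wrt_map
        by (rule sorted_wrt_mono_rel[OF _ s2]) (metis F2R subsetD upd_pv)
      have pvg: "piv g' = p" unfolding p_def ..
      have c2: "\<forall>y\<in>set (map upd F2). colless zs p (piv y)"
        using F2R upd_pv unfolding F2_def by auto
      have c1: "\<forall>x\<in>set (map upd F1). colless zs (piv x) p"
        using F1R upd_pv unfolding F1_def by auto
      have m2': "sorted_wrt (\<lambda>a b. colless zs (piv a) (piv b)) (g' # map upd F2)"
        using m2 c2 pvg by simp
      have cross: "\<forall>x\<in>set (map upd F1). \<forall>y\<in>set (g' # map upd F2). colless zs (piv x) (piv y)"
      proof (intro ballI)
        fix x y assume x: "x \<in> set (map upd F1)" and y: "y \<in> set (g' # map upd F2)"
        have "colless zs (piv x) p" using c1 x by blast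
        moreover have "y = g' \<or> colless zs p (piv y)" using c2 y by auto
        ultimately show "colless zs (piv x) (piv y)" using pvg col_trans by metis
      qed
      show ?thesis unfolding R'_def sorted_wrt_append using m1 m2' cross by blast
    qed
    have otherR': "piv x \<notin> y" if xR: "x \<in> set R'" and yR: "y \<in> set R'" and xy: "x \<noteq> y" for x y
    proof -
      from xR setR' consider r where "r \<in> set R" "x = upd r" | "x = g'" by blast
      then show ?thesis
      proof cases
        case 1
        from yR setR' consider r' where "r' \<in> set R" "y = upd r'" | "y = g'" by blast
        then show ?thesis
        proof cases
          case 2
          have "piv x = piv r" using upd_pv[OF 1(1)] 1(2) by simp
          then show ?thesis using 2 pivnot[OF 1(1)] by simp
        next
          case (1 r')
          have "r \<noteq> r'" using 1 \<open>x = upd r\<close> xy by auto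
          then have "piv r \<notin> r'" by (rule rref_other[OF R \<open>r \<in> set R\<close> 1(1)])
          have px: "piv x = piv r" using upd_pv[OF \<open>r \<in> set R\<close>] \<open>x = upd r\<close> by simp
          show ?thesis
          proof
            assume "piv x \<in> y"
            then have "piv r \<in> upd r'" using px 1(2) by simp
            then have "piv r \<in> r' \<union> g'" using upd_sub[of r'] by (rule subsetD[rotated])
            then show False using \<open>piv r \<notin> r'\<close> pivnot[OF \<open>r \<in> set R\<close>] by simp
          qed
        qed
      next
        case 2
        then have "y \<noteq> g'" using xy by simp
        then obtain r' where "y = upd r'" using yR setR' by blast
        then show ?thesis using 2 p_upd unfolding p_def by simp
      qed
    qed
    have rowsR'': "\<forall>x\<in>set R'. finite x \<and> x \<noteq> {}" using rowsR' by (intro ballI)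
    have otherR'': "\<forall>x\<in>set R'. \<forall>y\<in>set R'. x \<noteq> y \<longrightarrow> piv x \<notin> y" using otherR' by (intro ballI impI)
    have rR': "rref R'" unfolding rref_def using rowsR'' sortR' otherR'' by simp
    have S_span2: "setsum2 S \<in> f2span gs'" using S_span sp by simp
    have S_span3: "setsum2 S \<in> f2span (g#gs')" by (rule subsetD[OF span_sub S_span2])
    have g'_in: "g' \<in> f2span (g#gs')"
      unfolding g'_def by (rule span_closed[OF g_span S_span3])
    have span1: "f2span R' \<subseteq> f2span (g#gs')"
    proof (rule span_subset, rule subsetI)
      fix x assume "x \<in> set R'"
      then consider r where "r \<in> set R" "x = upd r" | "x = g'" using setR' by blast
      then show "x \<in> f2span (g#gs')"
      proof cases
        case 1
        have "r \<in> f2span R" using gen_in_span[OF 1(1)] .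
        then have "r \<in> f2span gs'" using sp by simp
        then have rin: "r \<in> f2span (g#gs')" by (rule subsetD[OF span_sub])
        show ?thesis
        proof (cases "p \<in> r")
          case True
          then have "x = sdiff r g'" using 1(2) unfolding upd_def by simp
          then show ?thesis using span_closed[OF rin g'_in] by simp
        next
          case False
          then have "x = r" using 1(2) unfolding upd_def by simp
          then show ?thesis using rin by simp
        qed
      qed (use g'_in in simp)
    qed
    have Rsub: "set R \<subseteq> f2span R'"
    proof
      fix r assume r: "r \<in> set R"
      have "upd r \<in> set R'" using setR' r by blast
      then have u: "upd r \<in> f2span R'" by (rule gen_in_span)
      have gg: "g' \<in> f2span R'" using setR' by (intro gen_in_span) simp
      have "r = upd r \<or> r = sdiff (upd r) g'" unfolding upd_def by auto
      then show "r \<in> f2span R'" using u gg span_closed by metis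
    qed
    then have spR: "f2span R \<subseteq> f2span R'" by (rule span_subset)
    have span2: "f2span (g#gs') \<subseteq> f2span R'"
    proof (rule span_subset, rule subsetI)
      fix x assume "x \<in> set (g#gs')"
      then consider "x = g" | "x \<in> set gs'" by auto
      then show "x \<in> f2span R'"
      proof cases
        case 1
        have gg: "g' \<in> f2span R'" using setR' by (intro gen_in_span) simp
        have "g = sdiff g' (setsum2 S)" unfolding g'_def by auto
        then show ?thesis using 1 gg S_span spR span_closed by blast
      next
        case 2
        then show ?thesis using gen_in_span[OF 2] sp spR by blast
      qed
    qed
    show ?thesis using rR' span1 span2 by blast
  qed
qed

lemma rref_exists: "\<forall>g\<in>set gs. finite g \<Longrightarrow> \<exists>R. rref R \<and> f2span R = f2span gs"
proof (induction gs)
  case Nil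
  have "rref []" unfolding rref_def by simp
  then show ?case by blast
next
  case (Cons g gs)
  then obtain R where "rref R" "f2span R = f2span gs" by auto
  then show ?case using rref_step[of R g gs] Cons.prems by simp
qed

lemma rref_rows_iff:
  assumes fin: "\<forall>g\<in>set gs. finite g"
  shows "is_rref_rows zs gs R \<longleftrightarrow> rref R \<and> f2span R = f2span gs"
proof
  assume A: "is_rref_rows zs gs R"
  have sp: "f2span R = f2span gs" using A unfolding is_rref_rows_def by (elim conjE)
  have ne: "\<forall>r\<in>set R. r \<noteq> {}" using A unfolding is_rref_rows_def by (elim conjE)
  have A3: "\<forall>i j. i < j \<and> j < length R \<longrightarrow>
        (\<exists>ti tj. is_pivot zs (R ! i) ti \<and> is_pivot zs (R ! j) tj \<and> colless zs ti tj)"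
    using A unfolding is_rref_rows_def by (elim conjE)
  have A4: "\<forall>i<length R. \<forall>j<length R. i \<noteq> j \<longrightarrow> (\<forall>t. is_pivot zs (R ! i) t \<longrightarrow> t \<notin> R ! j)"
    using A unfolding is_rref_rows_def by (elim conjE)
  have fin': "\<forall>r\<in>set R. finite r"
  proof
    fix r assume "r \<in> set R"
    then have "r \<in> f2span gs" using gen_in_span sp by metis
    then show "finite r" using span_finite_elems fin by metis
  qed
  have ord: "colless zs (piv (R!i)) (piv (R!j))" if ij: "i < j" "j < length R" for i j
  proof -
    have "\<exists>ti tj. is_pivot zs (R ! i) ti \<and> is_pivot zs (R ! j) tj \<and> colless zs ti tj"
      using A3 ij by simp
    then obtain ti tj where "is_pivot zs (R!i) ti" "is_pivot zs (R!j) tj" "colless zs ti tj"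
      by (elim exE conjE)
    then show ?thesis using piv_eq by metis
  qed
  have sorted: "sorted_wrt (\<lambda>a b. colless zs (piv a) (piv b)) R"
    unfolding sorted_wrt_iff_nth_less using ord by simp
  have oth: "\<forall>r\<in>set R. \<forall>r'\<in>set R. r \<noteq> r' \<longrightarrow> piv r \<notin> r'"
  proof (intro ballI impI)
    fix r r' assume rR: "r \<in> set R" and rR': "r' \<in> set R" and rr: "r \<noteq> r'"
    obtain i where i: "i < length R" "R!i = r" using rR unfolding in_set_conv_nth by blast
    obtain j where j: "j < length R" "R!j = r'" using rR' unfolding in_set_conv_nth by blast
    have "i \<noteq> j" using i j rr by auto
    moreover have "is_pivot zs (R!i) (piv r)" using piv fin' ne rR i(2) by metis
    ultimately show "piv r \<notin> r'" using A4 i j by metis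
  qed
  have rR: "rref R" unfolding rref_def using fin' ne sorted oth by simp
  show "rref R \<and> f2span R = f2span gs" using rR sp by (rule conjI)

next
  assume B: "rref R \<and> f2span R = f2span gs"
  then have R: "rref R" and sp: "f2span R = f2span gs" by simp_all
  have sorted: "sorted_wrt (\<lambda>a b. colless zs (piv a) (piv b)) R" using R unfolding rref_def by blast
  have ord: "colless zs (piv (R!i)) (piv (R!j))" if "i < j" "j < length R" for i j
    using sorted that unfolding sorted_wrt_iff_nth_less by blast
  have c1: "\<forall>r\<in>set R. r \<noteq> {}" using R unfolding rref_def by blast
  have c2: "\<forall>i j. i < j \<and> j < length R \<longrightarrow>
        (\<exists>ti tj. is_pivot zs (R ! i) ti \<and> is_pivot zs (R ! j) tj \<and> colless zs ti tj)"
  proof (intro allI impI)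
    fix i j assume "i < j \<and> j < length R"
    then show "\<exists>ti tj. is_pivot zs (R ! i) ti \<and> is_pivot zs (R ! j) tj \<and> colless zs ti tj"
      using ord rref_piv[OF R] nth_mem by (metis order.strict_trans)
  qed
  have c3: "\<forall>i<length R. \<forall>j<length R. i \<noteq> j \<longrightarrow> (\<forall>t. is_pivot zs (R ! i) t \<longrightarrow> t \<notin> R ! j)"
  proof (intro allI impI)
    fix i j t assume ij: "i < length R" "j < length R" "i \<noteq> j" "is_pivot zs (R ! i) t"
    have t: "t = piv (R!i)" using piv_eq[OF ij(4)] by simp
    have "R!i \<noteq> R!j"
    proof
      assume eq: "R!i = R!j"
      from ij(3) have "i < j \<or> j < i" by arith
      then show False using ord ij(1,2) eq col_irrefl by metis
    qed
    then show "t \<notin> R!j" using rref_other[OF R] ij nth_mem t by metis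
  qed
  show "is_rref_rows zs gs R" unfolding is_rref_rows_def using sp c1 c2 c3 by blast
qed

lemma LI_rref:
  assumes fin: "\<forall>g\<in>set gs. finite g"
  shows "rref (LI zs gs)" "f2span (LI zs gs) = f2span gs"
proof -
  obtain R where R: "rref R" "f2span R = f2span gs" using rref_exists[OF fin] by blast
  have "is_rref_rows zs gs R" using rref_rows_iff[OF fin] R by blast
  moreover have "R' = R" if "is_rref_rows zs gs R'" for R'
    using rref_rows_iff[OF fin] that rref_unique R by metis
  ultimately have "LI zs gs = R" unfolding LI_def by (rule the_equality)
  then show "rref (LI zs gs)" "f2span (LI zs gs) = f2span gs" using R by simp_all
qed

lemma LI_subspan: "\<forall>g\<in>set gs. finite g \<Longrightarrow> set (LI zs gs) \<subseteq> f2span gs"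
  using LI_rref gen_in_span by blast

lemma LI_single: "\<forall>g\<in>set gs. finite g \<Longrightarrow> {t} \<in> f2span gs \<Longrightarrow> {t} \<in> set (LI zs gs)"
  using LI_rref single_row by metis

lemma LI_finite: "\<forall>g\<in>set gs. finite g \<Longrightarrow> \<forall>r\<in>set (LI zs gs). finite r"
  using LI_rref unfolding rref_def by blast

end


declare check_loop.simps[simp del]

lemma keep_div_sdiff: "keep_div zs (sdiff a b) = sdiff (keep_div zs a) (keep_div zs b)"
  unfolding keep_div_def by (auto simp: sdiff_def)

lemma keep_div_empty: "keep_div zs {} = {}"
  unfolding keep_div_def by simp

lemma Lin_sdiff: "Lin n (sdiff a b) = sdiff (Lin n a) (Lin n b)"
  unfolding Lin_def by (auto simp: sdiff_def)

lemma Lin_empty: "Lin n {} = {}"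
  unfolding Lin_def by simp

lemma canon_sdiff: "canon (sdiff a b) = sdiff (canon a) (canon b)"
proof -
  have inj: "inj sqterm" using sqterm_inj by (meson injI)
  show ?thesis unfolding canon_def sdiff_def
    using image_Un image_set_diff[OF inj] by metis
qed

lemma canon_empty: "canon {} = {}" unfolding canon_def by simp

lemma keep_div_sub: "keep_div zs f \<subseteq> f" unfolding keep_div_def by auto

lemma keep_div_keep_div: "set zs' \<subseteq> set zs \<Longrightarrow> keep_div zs' (keep_div zs f) = keep_div zs' f"
  unfolding keep_div_def by auto

lemma span_keep_div: "f2span (map (keep_div zs) L) = keep_div zs ` f2span L"
  by (rule span_linear) (simp_all add: keep_div_empty keep_div_sdiff)

lemma span_Lin: "f2span (map (Lin n) L) = Lin n ` f2span L"
  by (rule span_linear) (simp_all add: Lin_empty Lin_sdiff)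

lemma span_canon: "f2span (map canon L) = canon ` f2span L"
  by (rule span_linear) (simp_all add: canon_empty canon_sdiff)

lemma tone_terms: "tone \<in> terms n" unfolding terms_def tone_def by simp
lemma tmul_terms: "s \<in> terms n \<Longrightarrow> t \<in> terms n \<Longrightarrow> tmul s t \<in> terms n"
  unfolding terms_def tmul_def by simp
lemma var_terms: "z < n \<Longrightarrow> var z \<in> terms n"
  unfolding terms_def var_def sqterm_def by auto
lemma sqterm_terms: "u \<subseteq> {..<n} \<Longrightarrow> sqterm u \<in> terms n"
  unfolding terms_def sqterm_def by auto

lemma tmul_tone: "tmul tone t = t" unfolding tmul_def tone_def by simp
lemma tmul_comm: "tmul s t = tmul t s" unfolding tmul_def by (simp add: add.commute)

lemma var_apply: "var z i = (if i = z then 1 else 0)"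
  unfolding var_def sqterm_def by simp

lemma wdeg_var: "z < n \<Longrightarrow> wdeg n W (var z) = W z"
proof -
  assume z: "z < n"
  have "wdeg n W (var z) = (\<Sum>i<n. if i = z then W i else 0)"
    unfolding wdeg_def var_apply by (rule sum.cong) simp_all
  also have "\<dots> = W z" using z by (simp add: sum.delta)
  finally show ?thesis .
qed

lemma tdeg_var: "z < n \<Longrightarrow> tdeg n (var z) = 1"
  using wdeg_var[of z n "\<lambda>_. 1"] unfolding wdeg_def tdeg_def by simp

lemma wdeg_tmul: "wdeg n W (tmul s t) = wdeg n W s + wdeg n W t"
  unfolding wdeg_def tmul_def by (simp add: distrib_left sum.distrib)

lemma tdeg_tmul: "tdeg n (tmul s t) = tdeg n s + tdeg n t"
  unfolding tdeg_def tmul_def by (simp add: sum.distrib)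

lemma wdeg_le: "(\<And>i. i < n \<Longrightarrow> t i \<noteq> 0 \<Longrightarrow> W i \<le> m) \<Longrightarrow> wdeg n W t \<le> m * tdeg n t"
proof -
  assume h: "\<And>i. i < n \<Longrightarrow> t i \<noteq> 0 \<Longrightarrow> W i \<le> m"
  have "wdeg n W t = (\<Sum>i<n. W i * t i)" unfolding wdeg_def ..
  also have "\<dots> \<le> (\<Sum>i<n. m * t i)"
  proof (rule sum_mono)
    fix i assume "i \<in> {..<n}"
    then show "W i * t i \<le> m * t i" using h[of i] by (cases "t i = 0") simp_all
  qed
  also have "\<dots> = m * tdeg n t" unfolding tdeg_def by (simp add: sum_distrib_left)
  finally show ?thesis .
qed

lemma wdeg_cong:
  assumes h: "\<And>i. i < n \<Longrightarrow> t i \<noteq> 0 \<Longrightarrow> W i = W' i"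
  shows "wdeg n W t = wdeg n W' t"
  unfolding wdeg_def
proof (rule sum.cong)
  fix x assume "x \<in> {..<n}"
  then show "W x * t x = W' x * t x" using h[of x] by (cases "t x = 0") simp_all
qed simp

section \<open>Term orders\<close>

locale tord =
  fixes n :: nat and lt :: "pterm \<Rightarrow> pterm \<Rightarrow> bool"
  assumes TO: "term_order n lt"
begin

lemma lt_irrefl: "t \<in> terms n \<Longrightarrow> \<not> lt t t"
  using TO unfolding term_order_def by blast

lemma lt_trans: "s \<in> terms n \<Longrightarrow> t \<in> terms n \<Longrightarrow> u \<in> terms n \<Longrightarrow> lt s t \<Longrightarrow> lt t u \<Longrightarrow> lt s u"
proof -
  have "\<forall>s\<in>terms n. \<forall>t\<in>terms n. \<forall>u\<in>terms n. lt s t \<longrightarrow> lt t u \<longrightarrow> lt s u"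
    using TO unfolding term_order_def by (elim conjE)
  then show "s \<in> terms n \<Longrightarrow> t \<in> terms n \<Longrightarrow> u \<in> terms n \<Longrightarrow> lt s t \<Longrightarrow> lt t u \<Longrightarrow> lt s u" by blast
qed

lemma lt_total: "s \<in> terms n \<Longrightarrow> t \<in> terms n \<Longrightarrow> s \<noteq> t \<Longrightarrow> lt s t \<or> lt t s"
proof -
  have "\<forall>s\<in>terms n. \<forall>t\<in>terms n. s \<noteq> t \<longrightarrow> lt s t \<or> lt t s"
    using TO unfolding term_order_def by (elim conjE)
  then show "s \<in> terms n \<Longrightarrow> t \<in> terms n \<Longrightarrow> s \<noteq> t \<Longrightarrow> lt s t \<or> lt t s" by blast
qed

lemma lt_mult: "s \<in> terms n \<Longrightarrow> t \<in> terms n \<Longrightarrow> u \<in> terms n \<Longrightarrow> lt s t \<Longrightarrow> lt (tmul s u) (tmul t u)"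
proof -
  have "\<forall>s\<in>terms n. \<forall>t\<in>terms n. \<forall>u\<in>terms n. lt s t \<longrightarrow> lt (tmul s u) (tmul t u)"
    using TO unfolding term_order_def by (elim conjE)
  then show "s \<in> terms n \<Longrightarrow> t \<in> terms n \<Longrightarrow> u \<in> terms n \<Longrightarrow> lt s t \<Longrightarrow> lt (tmul s u) (tmul t u)" by blast
qed

lemma lt_one: "t \<in> terms n \<Longrightarrow> t \<noteq> tone \<Longrightarrow> lt tone t"
proof -
  have "\<forall>t\<in>terms n. t \<noteq> tone \<longrightarrow> lt tone t"
    using TO unfolding term_order_def by (elim conjE)
  then show "t \<in> terms n \<Longrightarrow> t \<noteq> tone \<Longrightarrow> lt tone t" by blast
qed

lemma lt_asym: "s \<in> terms n \<Longrightarrow> t \<in> terms n \<Longrightarrow> lt s t \<Longrightarrow> \<not> lt t s"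
  using lt_trans lt_irrefl by metis

lemma var_le_div:
  assumes t: "t \<in> terms n" and z: "z < n" and tz: "0 < t z"
  shows "t = var z \<or> lt (var z) t"
proof -
  define v where "v = (\<lambda>i. if i = z then t i - 1 else t i)"
  have vt: "v \<in> terms n" using t z unfolding v_def terms_def by auto
  have tv: "tmul v (var z) = t" unfolding tmul_def v_def var_apply using tz by auto
  show ?thesis
  proof (cases "v = tone")
    case True
    then show ?thesis using tv tmul_tone by simp
  next
    case False
    have "lt tone v" using lt_one[OF vt False] .
    then have "lt (tmul tone (var z)) (tmul v (var z))"
      using lt_mult[OF tone_terms vt var_terms[OF z]] by simp
    then show ?thesis using tv tmul_tone by simp
  qed
qed

end

section \<open>A term ordering compatible with a weight vector\<close>

definition wlt :: "nat \<Rightarrow> (nat \<Rightarrow> nat) \<Rightarrow> pterm \<Rightarrow> pterm \<Rightarrow> bool" where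
  "wlt n W t u \<longleftrightarrow> wdeg n W t < wdeg n W u \<or>
     (wdeg n W t = wdeg n W u \<and> (tdeg n t < tdeg n u \<or> (tdeg n t = tdeg n u \<and> lex_gt u t)))"

lemma tdeg_pos: "t \<in> terms n \<Longrightarrow> t \<noteq> tone \<Longrightarrow> 0 < tdeg n t"
proof -
  assume t: "t \<in> terms n" "t \<noteq> tone"
  then obtain i where i: "t i \<noteq> 0" unfolding tone_def by auto
  have "i < n"
  proof (rule ccontr)
    assume "\<not> i < n"
    then have "t i = 0" using t(1) unfolding terms_def by simp
    then show False using i by simp
  qed
  then have "t i \<le> tdeg n t" unfolding tdeg_def by (intro member_le_sum) simp_all
  then show ?thesis using i by simp
qed

lemma wlt_term_order: "term_order n (wlt n W)"
  unfolding term_order_def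
proof (intro conjI ballI impI)
  fix t :: pterm assume "t \<in> terms n"
  show "\<not> wlt n W t t" unfolding wlt_def using lex_irrefl by simp
next
  fix s t u :: pterm assume "wlt n W s t" "wlt n W t u"
  then show "wlt n W s u" unfolding wlt_def using lex_trans by (elim disjE conjE) auto
next
  fix s t :: pterm assume "s \<noteq> t"
  then show "wlt n W s t \<or> wlt n W t s" unfolding wlt_def using lex_total[of s t] by arith
next
  fix s t u :: pterm assume "wlt n W s t"
  then show "wlt n W (tmul s u) (tmul t u)" unfolding wlt_def wdeg_tmul tdeg_tmul lex_mult by simp
next
  fix t assume "t \<in> terms n" "t \<noteq> tone"
  then have "0 < tdeg n t" by (rule tdeg_pos)
  moreover have "wdeg n W tone = 0" "tdeg n tone = 0" unfolding wdeg_def tdeg_def tone_def by simp_all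
  ultimately show "wlt n W tone t" unfolding wlt_def by auto
qed

lemma wlt_compatible: "compatible n W (wlt n W)"
  unfolding compatible_def wlt_def by simp


locale mainctx =
  fixes n :: nat and G0 :: "ppoly list"
  assumes G0fin: "\<forall>g\<in>set G0. finite g"
    and G0terms: "\<forall>g\<in>set G0. g \<subseteq> terms n"
begin

lemma V0_terms: "v \<in> f2span G0 \<Longrightarrow> t \<in> v \<Longrightarrow> t \<in> terms n"
  using span_sub_Union G0terms by blast

lemma V0_sub: "v \<in> f2span G0 \<Longrightarrow> t \<in> v \<Longrightarrow> \<exists>g\<in>set G0. t \<in> g"
  using span_sub_Union by blast

lemma loop_some:
  assumes TO: "term_order n lt"
  shows "distinct zs \<Longrightarrow> set zs \<subseteq> {..<n} \<Longrightarrow> (\<forall>g\<in>set L. finite g) \<Longrightarrow>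
    f2span L = keep_div zs ` f2span G0 \<Longrightarrow> (\<forall>z\<in>set zs. \<exists>f\<in>f2span G0. is_LT lt f (var z)) \<Longrightarrow>
    check_loop \<delta> zs L d w \<noteq> None"
proof (induction \<delta> zs L d w rule: check_loop.induct)
  case (1 \<delta> zs L d w)
  interpret tord n lt using TO by unfold_locales
  show ?case
  proof (cases "zs = []")
    case True then show ?thesis by (subst check_loop.simps) simp
  next
    case False
    define gs' where "gs' = LI zs L"
    define zt where "zt = filter (\<lambda>z. {var z} \<in> set gs') zs"
    have eq: "check_loop \<delta> zs L d w = (if zt = [] then None else
       check_loop \<delta> (filter (\<lambda>z. z \<notin> set zt) zs) (map (keep_div (filter (\<lambda>z. z \<notin> set zt) zs)) gs')
         (\<delta> * d + 1) (\<lambda>k. if k \<in> set zt then d else w k))"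
      by (subst check_loop.simps) (simp only: False Let_def gs'_def zt_def if_False)
    interpret colctx zs using 1(2) by unfold_locales
    have fin: "\<forall>g\<in>set gs'. finite g" unfolding gs'_def using LI_finite 1(4) by blast
    have spgs': "f2span gs' = f2span L" unfolding gs'_def using LI_rref(2) 1(4) by blast
    have zn: "z < n" if "z \<in> set zs" for z using 1(3) that by blast
    have "\<exists>m\<in>set zs. \<forall>x\<in>set zs. x \<noteq> m \<longrightarrow> lt (var m) (var x)"
    proof (rule finite_has_min)
      show "finite (set zs)" by simp
      show "set zs \<noteq> {}" using False by simp
    next
      fix x y z assume "x \<in> set zs" "y \<in> set zs" "z \<in> set zs" "lt (var x) (var y)" "lt (var y) (var z)"
      then show "lt (var x) (var z)" using lt_trans var_terms zn by metis
    next
      fix x y assume "x \<in> set zs" "y \<in> set zs" "x \<noteq> y"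
      then show "lt (var x) (var y) \<or> lt (var y) (var x)" using lt_total var_terms zn var_inj by metis
    qed
    then obtain z0 where z0: "z0 \<in> set zs" "\<forall>z\<in>set zs. z \<noteq> z0 \<longrightarrow> lt (var z0) (var z)" by blast
    obtain f where f: "f \<in> f2span G0" "is_LT lt f (var z0)" using 1(6) z0(1) by blast
    have z0n: "var z0 \<in> terms n" using var_terms zn z0(1) by blast
    have kd: "keep_div zs f = {var z0}"
    proof (intro equalityI subsetI)
      fix t assume t: "t \<in> keep_div zs f"
      then have tf: "t \<in> f" and tz: "\<exists>z\<in>set zs. 0 < t z" unfolding keep_div_def by simp_all
      then obtain z where z: "z \<in> set zs" "0 < t z" by blast
      have tn: "t \<in> terms n" using V0_terms f(1) tf by blast
      show "t \<in> {var z0}"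
      proof (rule ccontr)
        assume "t \<notin> {var z0}"
        then have tne: "t \<noteq> var z0" by simp
        then have ltz: "lt t (var z0)" using f(2) tf unfolding is_LT_def by blast
        have "t = var z \<or> lt (var z) t" using var_le_div[OF tn zn[OF z(1)] z(2)] .
        moreover have "z = z0 \<or> lt (var z0) (var z)" using z0(2) z(1) by blast
        ultimately have "lt (var z0) t"
          using tne lt_trans[OF z0n var_terms[OF zn[OF z(1)]] tn] by metis
        then show False using lt_asym[OF tn z0n ltz] by simp
      qed
    next
      fix t assume "t \<in> {var z0}"
      then have t: "t = var z0" by simp
      have "var z0 \<in> f" using f(2) unfolding is_LT_def by simp
      moreover have "0 < var z0 z0" by (simp add: var_apply)
      ultimately show "t \<in> keep_div zs f" unfolding keep_div_def using t z0(1) by blast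
    qed
    have "{var z0} \<in> f2span L" using kd f(1) 1(5) by (metis imageI)
    then have "{var z0} \<in> f2span gs'" using spgs' by simp
    then have "{var z0} \<in> set gs'" unfolding gs'_def using LI_single 1(4) spgs' gs'_def by metis
    then have "z0 \<in> set zt" unfolding zt_def using z0(1) by simp
    then have ztne: "zt \<noteq> []" by auto
    define zs' where "zs' = filter (\<lambda>z. z \<notin> set zt) zs"
    have zs'sub: "set zs' \<subseteq> set zs" unfolding zs'_def by auto
    have p1: "distinct zs'" unfolding zs'_def using 1(2) by simp
    have p2: "set zs' \<subseteq> {..<n}" using zs'sub 1(3) by blast
    have p3: "\<forall>g\<in>set (map (keep_div zs') gs'). finite g"
      using fin keep_div_sub finite_subset by fastforce
    have p4: "f2span (map (keep_div zs') gs') = keep_div zs' ` f2span G0"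
    proof -
      have "f2span (map (keep_div zs') gs') = keep_div zs' ` f2span L" using span_keep_div spgs' by metis
      also have "\<dots> = keep_div zs' ` keep_div zs ` f2span G0" using 1(5) by simp
      also have "\<dots> = keep_div zs' ` f2span G0"
        unfolding image_image using keep_div_keep_div[OF zs'sub] by simp
      finally show ?thesis .
    qed
    have p5: "\<forall>z\<in>set zs'. \<exists>f\<in>f2span G0. is_LT lt f (var z)" using 1(6) zs'sub by blast
    have "check_loop \<delta> zs' (map (keep_div zs') gs') (\<delta> * d + 1) (\<lambda>k. if k \<in> set zt then d else w k) \<noteq> None"
      using 1(1)[OF False gs'_def zt_def ztne] p1 p2 p3 p4 p5 unfolding zs'_def by blast
    then show ?thesis using eq ztne unfolding zs'_def by simp
  qed
qed

definition good :: "(nat \<Rightarrow> nat) \<Rightarrow> nat list \<Rightarrow> nat \<Rightarrow> bool" where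
  "good w zs z \<longleftrightarrow> (\<exists>f\<in>f2span G0. var z \<in> f \<and>
     (\<forall>t\<in>f. t \<noteq> var z \<longrightarrow> (\<forall>j\<in>set zs. t j = 0) \<and> wdeg n w t < w z))"

definition goodF :: "(nat \<Rightarrow> nat) \<Rightarrow> nat \<Rightarrow> bool" where
  "goodF W z \<longleftrightarrow> (\<exists>f\<in>f2span G0. var z \<in> f \<and> (\<forall>t\<in>f. t \<noteq> var z \<longrightarrow> wdeg n W t < W z))"

lemma loop_sound:
  "check_loop \<delta> zs L d w = Some W \<Longrightarrow> distinct zs \<Longrightarrow> set zs \<subseteq> set zs0 \<Longrightarrow>
   (\<forall>g\<in>set L. finite g) \<Longrightarrow> f2span L = keep_div zs ` f2span G0 \<Longrightarrow>
   (\<forall>g\<in>set G0. \<forall>t\<in>g. tdeg n t \<le> \<delta>) \<Longrightarrow>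
   (\<forall>i. i \<notin> set zs0 - set zs \<longrightarrow> w i = 0) \<Longrightarrow> (\<forall>i\<in>set zs0 - set zs. w i \<le> m) \<Longrightarrow> \<delta> * m < d \<Longrightarrow>
   (\<forall>z\<in>set zs0 - set zs. good w zs z) \<Longrightarrow> \<forall>z\<in>set zs0. goodF W z"
proof (induction \<delta> zs L d w arbitrary: m rule: check_loop.induct)
  case (1 \<delta> zs L d w m)
  show ?case
  proof (cases "zs = []")
    case True
    have "W = w" using 1(2) True by (subst (asm) check_loop.simps) simp
    show ?thesis
    proof
      fix z assume z: "z \<in> set zs0"
      then have "good w zs z" using 1(11) True by simp
      then show "goodF W z" unfolding good_def goodF_def using \<open>W = w\<close> by blast
    qed
  next
    case False
    define gs' where "gs' = LI zs L"
    define zt where "zt = filter (\<lambda>z. {var z} \<in> set gs') zs"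
    define zs' where "zs' = filter (\<lambda>z. z \<notin> set zt) zs"
    define w' where "w' = (\<lambda>k. if k \<in> set zt then d else w k)"
    have eq: "check_loop \<delta> zs L d w = (if zt = [] then None else
       check_loop \<delta> (filter (\<lambda>z. z \<notin> set zt) zs) (map (keep_div (filter (\<lambda>z. z \<notin> set zt) zs)) gs')
         (\<delta> * d + 1) (\<lambda>k. if k \<in> set zt then d else w k))"
      by (subst check_loop.simps) (simp only: False Let_def gs'_def zt_def if_False)
    have ztne: "zt \<noteq> []" using eq 1(2) by auto
    have rec: "check_loop \<delta> zs' (map (keep_div zs') gs') (\<delta> * d + 1) w' = Some W"
      using eq 1(2) ztne unfolding zs'_def w'_def by simp
    interpret colctx zs using 1(3) by unfold_locales
    have fin: "\<forall>g\<in>set gs'. finite g" unfolding gs'_def using LI_finite 1(5) by blast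
    have spgs': "f2span gs' = f2span L" unfolding gs'_def using LI_rref(2) 1(5) by blast
    have ztsub: "set zt \<subseteq> set zs" unfolding zt_def by auto
    have zs'sub: "set zs' \<subseteq> set zs" unfolding zs'_def by auto
    have zs'eq: "set zs' = set zs - set zt" unfolding zs'_def by auto
    define m' where "m' = max m d"
    have p1: "distinct zs'" unfolding zs'_def using 1(3) by simp
    have p2: "set zs' \<subseteq> set zs0" using zs'sub 1(4) by blast
    have p3: "\<forall>g\<in>set (map (keep_div zs') gs'). finite g"
      using fin keep_div_sub finite_subset by fastforce
    have p4: "f2span (map (keep_div zs') gs') = keep_div zs' ` f2span G0"
    proof -
      have "f2span (map (keep_div zs') gs') = keep_div zs' ` f2span L" using span_keep_div spgs' by metis
      also have "\<dots> = keep_div zs' ` keep_div zs ` f2span G0" using 1(6) by simp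
      also have "\<dots> = keep_div zs' ` f2span G0"
        unfolding image_image using keep_div_keep_div[OF zs'sub] by simp
      finally show ?thesis .
    qed
    have p6: "\<forall>i. i \<notin> set zs0 - set zs' \<longrightarrow> w' i = 0"
    proof (intro allI impI)
      fix i assume i: "i \<notin> set zs0 - set zs'"
      have "i \<notin> set zt" using i ztsub 1(4) zs'eq by blast
      moreover have "i \<notin> set zs0 - set zs" using i zs'sub by blast
      ultimately show "w' i = 0" unfolding w'_def using 1(8) by simp
    qed
    have p7: "\<forall>i\<in>set zs0 - set zs'. w' i \<le> m'"
    proof
      fix i assume i: "i \<in> set zs0 - set zs'"
      show "w' i \<le> m'"
      proof (cases "i \<in> set zt")
        case True then show ?thesis unfolding w'_def m'_def by simp
      next
        case False
        then have "i \<in> set zs0 - set zs" using i zs'eq by blast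
        then have "w i \<le> m" using 1(9) by blast
        then show ?thesis unfolding w'_def m'_def using False by simp
      qed
    qed
    have p8: "\<delta> * m' < \<delta> * d + 1"
    proof (cases "m \<le> d")
      case True then show ?thesis unfolding m'_def by simp
    next
      case False
      have "\<delta> = 0"
      proof (rule ccontr)
        assume "\<delta> \<noteq> 0"
        then have "m \<le> \<delta> * m" by simp
        then show False using 1(10) False by linarith
      qed
      then show ?thesis by simp
    qed
    have p9: "\<forall>z\<in>set zs0 - set zs'. good w' zs' z"
    proof
      fix z assume z: "z \<in> set zs0 - set zs'"
      show "good w' zs' z"
      proof (cases "z \<in> set zt")
        case False
        then have zold: "z \<in> set zs0 - set zs" using z zs'eq by blast
        then obtain f where f: "f \<in> f2span G0" "var z \<in> f"
          "\<forall>t\<in>f. t \<noteq> var z \<longrightarrow> (\<forall>j\<in>set zs. t j = 0) \<and> wdeg n w t < w z"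
          using 1(11) unfolding good_def by blast
        have wz: "w' z = w z" unfolding w'_def using False by simp
        have "\<forall>t\<in>f. t \<noteq> var z \<longrightarrow> (\<forall>j\<in>set zs'. t j = 0) \<and> wdeg n w' t < w' z"
        proof (intro ballI impI)
          fix t assume t: "t \<in> f" "t \<noteq> var z"
          have tz: "\<forall>j\<in>set zs. t j = 0" using f(3) t by blast
          have "wdeg n w' t = wdeg n w t"
          proof (rule wdeg_cong)
            fix i assume i: "i < n" "t i \<noteq> 0"
            have "i \<notin> set zt"
            proof
              assume "i \<in> set zt"
              then have "i \<in> set zs" using ztsub by (rule subsetD[rotated])
              then have "t i = 0" using tz by (rule bspec[rotated])
              then show False using i(2) by simp
            qed
            then show "w' i = w i" unfolding w'_def by simp
          qed
          then show "(\<forall>j\<in>set zs'. t j = 0) \<and> wdeg n w' t < w' z" using f(3) t tz zs'sub wz by auto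
        qed
        then show ?thesis unfolding good_def using f(1,2) by blast
      next
        case True
        then have "{var z} \<in> set gs'" unfolding zt_def by simp
        then have "{var z} \<in> f2span L" using gen_in_span spgs' by metis
        then obtain f where f: "f \<in> f2span G0" "keep_div zs f = {var z}" using 1(6) by (metis imageE)
        have wz: "w' z = d" unfolding w'_def using True by simp
        have vz: "var z \<in> f" using f(2) keep_div_sub by blast
        have "\<forall>t\<in>f. t \<noteq> var z \<longrightarrow> (\<forall>j\<in>set zs'. t j = 0) \<and> wdeg n w' t < w' z"
        proof (intro ballI impI)
          fix t assume t: "t \<in> f" "t \<noteq> var z"
          then have "t \<notin> keep_div zs f" using f(2) by simp
          then have tz: "\<forall>j\<in>set zs. t j = 0" unfolding keep_div_def using t(1) by auto
          have "wdeg n w' t \<le> m * tdeg n t"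
          proof (rule wdeg_le)
            fix i assume i0: "i < n" "t i \<noteq> 0"
            have i: "i \<notin> set zs"
            proof
              assume "i \<in> set zs"
              then have "t i = 0" using tz by (rule bspec[rotated])
              then show False using i0(2) by simp
            qed
            then have "i \<notin> set zt" using ztsub by blast
            then have "w' i = w i" unfolding w'_def by simp
            moreover have "w i \<le> m" using 1(8) 1(9) i by (cases "i \<in> set zs0") auto
            ultimately show "w' i \<le> m" by simp
          qed
          moreover have "tdeg n t \<le> \<delta>" using V0_sub[OF f(1) t(1)] 1(7) by blast
          then have "m * tdeg n t \<le> m * \<delta>" by (rule mult_le_mono2)
          moreover have "m * \<delta> = \<delta> * m" by simp
          ultimately have "wdeg n w' t < d" using 1(10) by linarith
          then show "(\<forall>j\<in>set zs'. t j = 0) \<and> wdeg n w' t < w' z" using tz zs'sub wz by auto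
        qed
        then show ?thesis unfolding good_def using f(1) vz by blast
      qed
    qed
    show ?thesis
      using 1(1)[OF False gs'_def zt_def ztne, folded zs'_def w'_def, OF rec p1 p2 p3 p4 1(7) p6[unfolded w'_def] p7[unfolded w'_def] p8 p9] .
  qed
qed

end


lemma bmul_zero: "bmul {} g = {}"
  unfolding bmul_def by simp

lemma bmul_one: "bmul {{}} g = g"
proof (rule set_eqI)
  fix u
  have "{(a, b). a \<in> {{}} \<and> b \<in> g \<and> a \<union> b = u} = (if u \<in> g then {({}, u)} else {})"
    by auto
  then show "u \<in> bmul {{}} g \<longleftrightarrow> u \<in> g" unfolding bmul_def by simp
qed

lemma map2_sel: "length cs = length gs \<Longrightarrow>
  map2 bmul (map (\<lambda>c. if c then {{}} else {}) cs) gs = map2 (\<lambda>c g. if c then g else {}) cs gs"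
proof (induction cs arbitrary: gs)
  case Nil then show ?case by simp
next
  case (Cons c cs)
  then obtain g gs' where "gs = g # gs'" by (cases gs) auto
  then show ?case using Cons by (simp add: bmul_zero bmul_one)
qed

lemma span_in_ideal: "f2span (gs :: bpoly list) \<subseteq> bideal n gs"
proof
  fix v assume "v \<in> f2span gs"
  then obtain cs where cs: "length cs = length gs" "v = lsum (map2 (\<lambda>c g. if c then g else {}) cs gs)"
    unfolding f2span_def by auto
  define hs :: "bpoly list" where "hs = map (\<lambda>c. if c then {{}} else {}) cs"
  have "length hs = length gs" unfolding hs_def using cs by simp
  moreover have "set hs \<subseteq> bpolys n" unfolding hs_def bpolys_def by auto
  moreover have "v = lsum (map2 bmul hs gs)" unfolding hs_def using map2_sel[OF cs(1)] cs(2) by simp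
  ultimately show "v \<in> bideal n gs" unfolding bideal_def by blast
qed

lemma choose_list:
  assumes "\<forall>z\<in>set zs. \<exists>f. P z f"
  shows "length (map (\<lambda>z. SOME f. P z f) zs) = length zs \<and>
         (\<forall>i<length zs. P (zs!i) (map (\<lambda>z. SOME f. P z f) zs ! i))"
proof -
  have "P (zs!i) (SOME f. P (zs!i) f)" if "i < length zs" for i
    using assms that nth_mem by (metis someI_ex)
  then show ?thesis by simp
qed

context mainctx begin

lemma dim_bound:
  assumes TO: "term_order n lt" and dist: "distinct zs" and zn: "set zs \<subseteq> {..<n}"
    and len: "length Fs = length zs" and Fs: "set Fs \<subseteq> f2span G0"
    and LT: "\<forall>i<length zs. is_LT lt (Fs!i) (var (zs!i))"
  shows "length zs \<le> f2dim (map (Lin n) (map (keep_div zs) G0))"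
proof -
  interpret tord n lt using TO by unfold_locales
  define s where "s = length zs"
  define b where "b i = Lin n (keep_div zs (Fs!i))" for i
  define B where "B = b ` {..<s}"
  define L where "L = map (Lin n) (map (keep_div zs) G0)"
  have spL: "f2span L = Lin n ` keep_div zs ` f2span G0" unfolding L_def span_Lin span_keep_div ..
  have Fsi: "Fs!i \<in> f2span G0" if "i < s" for i using Fs len that s_def nth_mem by (metis subsetD)
  have BL: "B \<subseteq> f2span L" unfolding B_def spL b_def using Fsi by blast
  have zin: "zs!i < n" if "i < s" for i using zn that s_def nth_mem by (metis lessThan_iff subsetD)
  have vt: "var (zs!i) \<in> terms n" if "i < s" for i using var_terms zin that by blast
  have bsub: "b i \<subseteq> Fs!i" for i unfolding b_def Lin_def using keep_div_sub by blast
  have vin: "var (zs!i) \<in> b i" if i: "i < s" for i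
  proof -
    have "var (zs!i) \<in> Fs!i" using LT i s_def unfolding is_LT_def by blast
    moreover have "zs!i \<in> set zs" using i s_def by simp
    moreover have "0 < var (zs!i) (zs!i)" by (simp add: var_apply)
    ultimately have "var (zs!i) \<in> keep_div zs (Fs!i)" unfolding keep_div_def by blast
    then show ?thesis unfolding b_def Lin_def using tdeg_var[OF zin[OF i]] by simp
  qed
  have key: "j = i \<or> lt (var (zs!j)) (var (zs!i))" if ij: "i < s" "j < s" "var (zs!j) \<in> b i" for i j
  proof -
    have "var (zs!j) \<in> Fs!i" using bsub ij(3) by blast
    then have "var (zs!j) = var (zs!i) \<or> lt (var (zs!j)) (var (zs!i))"
      using LT ij(1) s_def unfolding is_LT_def by blast
    then show ?thesis using var_inj dist ij(1,2) s_def nth_eq_iff_index_eq by metis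
  qed
  have inj: "inj_on b {..<s}"
  proof (rule inj_onI)
    fix i j assume i: "i \<in> {..<s}" and j: "j \<in> {..<s}" and eq: "b i = b j"
    show "i = j"
    proof (rule ccontr)
      assume ne: "i \<noteq> j"
      have "lt (var (zs!i)) (var (zs!j))" using key[of j i] vin[of i] eq i j ne by auto
      moreover have "lt (var (zs!j)) (var (zs!i))" using key[of i j] vin[of j] eq i j ne by auto
      ultimately show False using lt_asym vt i j by blast
    qed
  qed
  have cardB: "card B = s" unfolding B_def using card_image[OF inj] by simp
  have indep: "f2indep B"
    unfolding f2indep_def
  proof (intro conjI allI impI)
    show "finite B" unfolding B_def by simp
  next
    fix C assume C: "C \<subseteq> B" "C \<noteq> {}"
    define J where "J = {i\<in>{..<s}. b i \<in> C}"
    have fJ: "finite J" unfolding J_def by simp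
    have Jne: "J \<noteq> {}" using C unfolding J_def B_def by blast
    have Js: "J \<subseteq> {..<s}" unfolding J_def by blast
    have "\<exists>m\<in>J. \<forall>x\<in>J. x \<noteq> m \<longrightarrow> lt (var (zs!x)) (var (zs!m))"
    proof (rule finite_has_min[OF fJ Jne])
      fix x y z assume "x \<in> J" "y \<in> J" "z \<in> J" "lt (var (zs!y)) (var (zs!x))" "lt (var (zs!z)) (var (zs!y))"
      then show "lt (var (zs!z)) (var (zs!x))" using lt_trans vt Js by (meson lessThan_iff subsetD)
    next
      fix x y assume xy: "x \<in> J" "y \<in> J" "x \<noteq> y"
      then have "var (zs!x) \<noteq> var (zs!y)" using var_inj dist Js s_def nth_eq_iff_index_eq
        by (metis lessThan_iff subsetD)
      then show "lt (var (zs!y)) (var (zs!x)) \<or> lt (var (zs!x)) (var (zs!y))"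
        using lt_total vt Js xy by (meson lessThan_iff subsetD)
    qed
    then obtain i0 where i0: "i0 \<in> J" "\<forall>x\<in>J. x \<noteq> i0 \<longrightarrow> lt (var (zs!x)) (var (zs!i0))" by blast
    have i0s: "i0 < s" using i0(1) Js by auto
    have "{c\<in>C. var (zs!i0) \<in> c} = {b i0}"
    proof (intro equalityI subsetI)
      fix c assume "c \<in> {c\<in>C. var (zs!i0) \<in> c}"
      then have c: "c \<in> C" "var (zs!i0) \<in> c" by simp_all
      then obtain j where j: "j < s" "c = b j" using C(1) unfolding B_def by auto
      have jJ: "j \<in> J" unfolding J_def using j c by simp
      have "j = i0"
      proof (rule ccontr)
        assume ne: "j \<noteq> i0"
        have "i0 = j \<or> lt (var (zs!i0)) (var (zs!j))" using key[OF j(1) i0s] c(2) j(2) by simp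
        then have "lt (var (zs!i0)) (var (zs!j))" using ne by simp
        moreover have "lt (var (zs!j)) (var (zs!i0))" using i0(2) jJ ne by blast
        ultimately show False using lt_asym vt i0s j(1) by blast
      qed
      then show "c \<in> {b i0}" using j by simp
    next
      fix c assume "c \<in> {b i0}"
      then show "c \<in> {c\<in>C. var (zs!i0) \<in> c}" using i0(1) vin[OF i0s] unfolding J_def by simp
    qed
    then have "var (zs!i0) \<in> setsum2 C" unfolding setsum2_def by simp
    then show "setsum2 C \<noteq> {}" by blast
  qed
  have fin: "finite {card B | B. B \<subseteq> f2span L \<and> f2indep B}"
  proof (rule finite_subset)
    show "{card B | B. B \<subseteq> f2span L \<and> f2indep B} \<subseteq> card ` Pow (f2span L)" by blast
    show "finite (card ` Pow (f2span L))" using finite_span[of L] by simp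
  qed
  have "card B \<in> {card B | B. B \<subseteq> f2span L \<and> f2indep B}" using BL indep by blast
  then have "card B \<le> f2dim L" unfolding f2dim_def using fin by (rule Max_ge[rotated])
  then show ?thesis using cardB s_def L_def by simp
qed

lemma goodF_LT:
  assumes TO: "term_order n lt" and comp: "compatible n W lt" and z: "z < n" and g: "goodF W z"
  shows "\<exists>F\<in>f2span G0. is_LT lt F (var z)"
proof -
  obtain F where F: "F \<in> f2span G0" "var z \<in> F" "\<forall>t\<in>F. t \<noteq> var z \<longrightarrow> wdeg n W t < W z"
    using g unfolding goodF_def by blast
  have "is_LT lt F (var z)" unfolding is_LT_def
  proof (intro conjI ballI impI)
    show "var z \<in> F" by (rule F(2))
  next
    fix t assume t: "t \<in> F" "t \<noteq> var z"
    have "wdeg n W t < wdeg n W (var z)" using F(3) t wdeg_var[OF z] by simp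
    moreover have "t \<in> terms n" using V0_terms F(1) t(1) by blast
    ultimately show "lt t (var z)" using comp var_terms[OF z] unfolding compatible_def by blast
  qed
  then show ?thesis using F(1) by blast
qed

end


theorem proposition6p4:
  fixes n :: nat and gs :: "bpoly list" and zs :: "nat list"
  assumes gs_in: "set gs \<subseteq> bpolys n"
    and proper: "bideal n gs \<noteq> bpolys n"
    and zs_distinct: "distinct zs"
    and zs_vars: "set zs \<subseteq> {..<n}"
  shows "(CHECK n (map canon gs) zs \<noteq> None \<longleftrightarrow>
           (\<exists>fs. set fs \<subseteq> f2span gs \<and> Z_separating n (bideal n gs) zs fs)) \<and>
         (\<forall>W lt. CHECK n (map canon gs) zs = Some W \<longrightarrow>
           term_order n lt \<longrightarrow> compatible n W lt \<longrightarrow>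
           (\<exists>fs. length fs = length zs \<and> set fs \<subseteq> f2span gs \<and>
              (\<forall>i<length zs. is_LT lt (canon (fs ! i)) (var (zs ! i)))))"
proof -
  define G0 where "G0 = map canon gs"
  have gfin: "finite g" "\<forall>u\<in>g. u \<subseteq> {..<n}" if "g \<in> set gs" for g
    using gs_in that unfolding bpolys_def by blast+
  have G0fin: "\<forall>g\<in>set G0. finite g" unfolding G0_def canon_def using gfin by auto
  have G0terms: "\<forall>g\<in>set G0. g \<subseteq> terms n" unfolding G0_def canon_def using gfin sqterm_terms by auto
  interpret mainctx n G0 using G0fin G0terms by unfold_locales
  have V0: "f2span G0 = canon ` f2span gs" unfolding G0_def by (rule span_canon)
  define \<delta> where "\<delta> = Max (insert 0 (tdeg n ` \<Union>(set G0)))"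
  have fU: "finite (\<Union>(set G0))" using G0fin by simp
  have deg: "\<forall>g\<in>set G0. \<forall>t\<in>g. tdeg n t \<le> \<delta>"
    unfolding \<delta>_def using fU by (auto intro!: Max_ge)
  define gs1 where "gs1 = map (keep_div zs) G0"
  have CH: "CHECK n G0 zs = (if f2dim (map (Lin n) gs1) < length zs then None else check_loop \<delta> zs gs1 1 (\<lambda>_. 0))"
    unfolding CHECK_def Let_def \<delta>_def gs1_def by (rule refl)
  have gs1fin: "\<forall>g\<in>set gs1. finite g" unfolding gs1_def using G0fin keep_div_sub finite_subset by fastforce
  have gs1span: "f2span gs1 = keep_div zs ` f2span G0" unfolding gs1_def by (rule span_keep_div)
  have sound: "\<forall>z\<in>set zs. goodF W z" if "CHECK n G0 zs = Some W" for W
  proof -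
    have "check_loop \<delta> zs gs1 1 (\<lambda>_. 0) = Some W" using that CH by (simp split: if_splits)
    then show ?thesis
      by (rule loop_sound[where m = 0 and zs0 = zs, OF _ zs_distinct subset_refl gs1fin gs1span deg]) simp_all
  qed
  have fromW: "\<exists>fs. length fs = length zs \<and> set fs \<subseteq> f2span gs \<and>
              (\<forall>i<length zs. is_LT lt (canon (fs ! i)) (var (zs ! i)))"
    if W: "CHECK n G0 zs = Some W" and TO: "term_order n lt" and comp: "compatible n W lt" for W lt
  proof -
    have ex: "\<forall>z\<in>set zs. \<exists>f. f \<in> f2span gs \<and> is_LT lt (canon f) (var z)"
    proof
      fix z assume z: "z \<in> set zs"
      have "\<exists>F\<in>f2span G0. is_LT lt F (var z)"
        using goodF_LT[OF TO comp _ ] sound[OF W] z zs_vars by blast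
      then show "\<exists>f. f \<in> f2span gs \<and> is_LT lt (canon f) (var z)" unfolding V0 by blast
    qed
    define fs where "fs = map (\<lambda>z. SOME f. f \<in> f2span gs \<and> is_LT lt (canon f) (var z)) zs"
    have fs: "length fs = length zs" "\<forall>i<length zs. fs!i \<in> f2span gs \<and> is_LT lt (canon (fs!i)) (var (zs!i))"
      using choose_list[OF ex] unfolding fs_def by blast+
    have "set fs \<subseteq> f2span gs"
    proof
      fix f assume "f \<in> set fs"
      then obtain i where "i < length fs" "fs!i = f" unfolding in_set_conv_nth by blast
      then show "f \<in> f2span gs" using fs by metis
    qed
    then show ?thesis using fs by blast
  qed
  have partA: "CHECK n G0 zs \<noteq> None \<longleftrightarrow> (\<exists>fs. set fs \<subseteq> f2span gs \<and> Z_separating n (bideal n gs) zs fs)"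
  proof
    assume "CHECK n G0 zs \<noteq> None"
    then obtain W where W: "CHECK n G0 zs = Some W" by blast
    obtain fs where fs: "length fs = length zs" "set fs \<subseteq> f2span gs"
      "\<forall>i<length zs. is_LT (wlt n W) (canon (fs ! i)) (var (zs ! i))"
      using fromW[OF W wlt_term_order wlt_compatible] by blast
    have "set fs \<subseteq> bideal n gs" using fs(2) span_in_ideal by blast
    then have "Z_separating n (bideal n gs) zs fs"
      unfolding Z_separating_def using fs(1,3) wlt_term_order by blast
    then show "\<exists>fs. set fs \<subseteq> f2span gs \<and> Z_separating n (bideal n gs) zs fs" using fs(2) by blast
  next
    assume "\<exists>fs. set fs \<subseteq> f2span gs \<and> Z_separating n (bideal n gs) zs fs"
    then obtain fs lt where fs: "set fs \<subseteq> f2span gs" "length fs = length zs" "term_order n lt"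
      "\<forall>i<length zs. is_LT lt (canon (fs ! i)) (var (zs ! i))"
      unfolding Z_separating_def by blast
    have Fs: "set (map canon fs) \<subseteq> f2span G0" using fs(1) V0 by auto
    have dim: "length zs \<le> f2dim (map (Lin n) gs1)"
      unfolding gs1_def
      by (rule dim_bound[OF fs(3) zs_distinct zs_vars _ Fs]) (use fs(2,4) in simp_all)
    have ex: "\<forall>z\<in>set zs. \<exists>f\<in>f2span G0. is_LT lt f (var z)"
    proof
      fix z assume "z \<in> set zs"
      then obtain i where i: "i < length zs" "zs!i = z" unfolding in_set_conv_nth by blast
      have "canon (fs!i) \<in> f2span G0" using fs(1,2) i(1) V0 nth_mem by (metis imageI subsetD)
      then show "\<exists>f\<in>f2span G0. is_LT lt f (var z)" using fs(4) i by blast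
    qed
    have "check_loop \<delta> zs gs1 1 (\<lambda>_. 0) \<noteq> None"
      by (rule loop_some[OF fs(3) zs_distinct zs_vars gs1fin gs1span ex])
    then show "CHECK n G0 zs \<noteq> None" using CH dim by simp
  qed
  show ?thesis unfolding G0_def[symmetric] using partA fromW by blast
qed

end
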